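(* Let $V$ be a vertex algebra, $g$ an automorphism of $V$ of finite order $T$, $W$ a vector space and $Y_W(\cdot,x):V\to\mathrm{Hom}(W,W((x^{1/T})))$ a linear map satisfying $Y_W(\mathbf 1,x)=\mathrm{id}_W$ and $Y_W(gv,x)=\lim_{x^{1/T}\to\omega_T^{-1}x^{1/T}}Y_W(v,x)$ for all $v\in V$ (where $\omega_T=e^{-2\pi\sqrt{-1}/T}$). Then the following are equivalent: (a) for any $u,v\in V$ there is $k\in\mathbb N$ with $(x_1-x_2)^kY_W(u,x_1)Y_W(v,x_2)\in\mathrm{Hom}(W,W((x_1^{1/T},x_2^{1/T})))$ and $x_2^k(e^{x_0}-1)^kY_W(Y(u,x_0)v,x_2)=\big((x_1-x_2)^kY_W(u,x_1)Y_W(v,x_2)\big)\big|_{x_1^{1/T}=(x_2e^{x_0})^{1/T}}$; (b) (weak $g$-twisted $\phi$-associativity) for any $u\in V^r$, $v\in V$, $w\in W$ there exists $l\in\mathbb N$ such that $(z+1)^{l+r/T}Y_W(u,(z+1)x_2)Y_W(v,x_2)w=(1+z)^{l+r/T}Y_W(Y(u,\log(1+z))v,x_2)w.$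
   Context: $V$ is a vertex algebra with vacuum $\mathbf 1$ and $Y(v,x)=\sum_{k\in\mathbb Z}v_kx^{-k-1}$; $g$ is an automorphism ($g\mathbf 1=\mathbf 1$, $gY(u,x)v=Y(gu,x)gv$) with $g^T=1$, and $V^r=\{v: gv=e^{-2\pi\sqrt{-1}r/T}v\}$ for $r\in\{0,\dots,T-1\}$. Binomial convention: $(a+b)^\alpha$ is expanded in nonnegative integral powers of the second summand $b$; thus $(z+1)^\alpha=\sum_k\binom{\alpha}{k}z^{\alpha-k}$ and $(1+z)^\alpha=\sum_k\binom{\alpha}{k}z^k$, and $Y_W(u,(z+1)x_2)=\sum_n u_n(z+1)^{-n-1}x_2^{-n-1}$ with the same convention. $Y(u,\log(1+z))v$ is $Y(u,x)v\in V((x))$ with $x=\log(1+z)$ substituted. The substitution $x_1^{1/T}=(x_2e^{x_0})^{1/T}$ sends $x_1^{j/T}$ to $x_2^{j/T}e^{jx_0/T}$. *)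

theory Defs
  imports Complex_Main "HOL-Library.Groups_Big_Fun"
    "HOL-Computational_Algebra.Formal_Laurent_Series"
begin

text \<open>The vertex operator of V is encoded by its modes:
  Y u v n = u_n v, so that Y(u,x)v = sum over n of (Y u v n) x^(-n-1).
  A map Y_W(.,x) : V -> Hom(W, W((x^(1/T)))) is encoded by coefficients:
  YW v w j = coefficient of x^(j/T) in Y_W(v,x)w.\<close>

definition vertex_algebra ::
  "(complex \<Rightarrow> 'v::ab_group_add \<Rightarrow> 'v) \<Rightarrow> ('v \<Rightarrow> 'v \<Rightarrow> int \<Rightarrow> 'v) \<Rightarrow> 'v \<Rightarrow> bool" where
  "vertex_algebra smul Y vac \<longleftrightarrow>
     vector_space smul \<and>
     (\<forall>v n. Vector_Spaces.linear smul smul (\<lambda>u. Y u v n)) \<and>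
     (\<forall>u n. Vector_Spaces.linear smul smul (\<lambda>v. Y u v n)) \<and>
     (\<forall>u v. \<exists>N. \<forall>n\<ge>N. Y u v n = 0) \<and>
     (\<forall>v n. Y vac v n = (if n = -1 then v else 0)) \<and>
     (\<forall>v n. n \<ge> 0 \<longrightarrow> Y v vac n = 0) \<and> (\<forall>v. Y v vac (-1) = v) \<and>
     \<comment> \<open>Jacobi identity, in its equivalent component (Borcherds) form\<close>
     (\<forall>u v w m n r.
        Sum_any (\<lambda>i::nat. smul ((of_int m) gchoose i) (Y (Y u v (r + int i)) w (m + n - int i)))
        = Sum_any (\<lambda>i::nat. smul ((-1)^i * ((of_int r) gchoose i)) (Y u (Y v w (n + int i)) (m + r - int i)))
          - Sum_any (\<lambda>i::nat. smul ((-1) powi (r + int i) * ((of_int r) gchoose i))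
                                  (Y v (Y u w (m + int i)) (n + r - int i))))"

definition va_automorphism ::
  "(complex \<Rightarrow> 'v::ab_group_add \<Rightarrow> 'v) \<Rightarrow> ('v \<Rightarrow> 'v \<Rightarrow> int \<Rightarrow> 'v) \<Rightarrow> 'v \<Rightarrow> ('v \<Rightarrow> 'v) \<Rightarrow> bool" where
  "va_automorphism smul Y vac g \<longleftrightarrow>
     Vector_Spaces.linear smul smul g \<and> bij g \<and> g vac = vac \<and>
     (\<forall>u v n. g (Y u v n) = Y (g u) (g v) n)"

definition eigenspace_Vr ::
  "(complex \<Rightarrow> 'v \<Rightarrow> 'v) \<Rightarrow> ('v \<Rightarrow> 'v) \<Rightarrow> nat \<Rightarrow> nat \<Rightarrow> 'v set" where
  "eigenspace_Vr smul g T r =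
     {v. g v = smul (exp (- 2 * pi * \<i> * of_nat r / of_nat T)) v}"

text \<open>Y_W : V -> Hom(W, W((x^(1/T)))) linear, with Y_W(1,x) = id and the g-twist condition
  Y_W(g v, x) = Y_W(v,x) with x^(1/T) replaced by omega_T^(-1) x^(1/T),
  omega_T = exp(-2 pi i / T); i.e. the x^(j/T) coefficient is multiplied by exp(2 pi i j / T).\<close>
definition twisted_field_map ::
  "(complex \<Rightarrow> 'v::ab_group_add \<Rightarrow> 'v) \<Rightarrow> (complex \<Rightarrow> 'w::ab_group_add \<Rightarrow> 'w) \<Rightarrow> 'v \<Rightarrow> ('v \<Rightarrow> 'v)
    \<Rightarrow> nat \<Rightarrow> ('v \<Rightarrow> 'w \<Rightarrow> int \<Rightarrow> 'w) \<Rightarrow> bool" where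
  "twisted_field_map smul smulW vac g T YW \<longleftrightarrow>
     vector_space smulW \<and>
     (\<forall>w j. Vector_Spaces.linear smul smulW (\<lambda>v. YW v w j)) \<and>
     (\<forall>v j. Vector_Spaces.linear smulW smulW (\<lambda>w. YW v w j)) \<and>
     (\<forall>v w. \<exists>N. \<forall>j<N. YW v w j = 0) \<and>
     (\<forall>w j. YW vac w j = (if j = 0 then w else 0)) \<and>
     (\<forall>v w j. YW (g v) w j = smulW (exp (2 * pi * \<i> * of_int j / of_nat T)) (YW v w j))"

text \<open>Coefficient of x1^(i/T) x2^(j/T) in (x1 - x2)^k Y_W(u,x1) Y_W(v,x2) w.\<close>
definition prodk ::
  "(complex \<Rightarrow> 'w::ab_group_add \<Rightarrow> 'w) \<Rightarrow> nat \<Rightarrow> ('v \<Rightarrow> 'w \<Rightarrow> int \<Rightarrow> 'w) \<Rightarrow> nat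
    \<Rightarrow> 'v \<Rightarrow> 'v \<Rightarrow> 'w \<Rightarrow> int \<Rightarrow> int \<Rightarrow> 'w" where
  "prodk smulW T YW k u v w i j =
     (\<Sum>m\<le>k. smulW ((-1)^m * of_nat (k choose m))
        (YW u (YW v w (j - int T * int m)) (i - int T * int (k - m))))"

text \<open>Membership in W((x1^(1/T), x2^(1/T))): finitely many negative powers in both variables.\<close>
definition in_W_two_var :: "(int \<Rightarrow> int \<Rightarrow> 'w::zero) \<Rightarrow> bool" where
  "in_W_two_var F \<longleftrightarrow> (\<exists>N. \<forall>i j. i < N \<or> j < N \<longrightarrow> F i j = 0)"

text \<open>Coefficient of x0^p x2^(m/T) in x2^k (e^x0 - 1)^k Y_W(Y(u,x0)v, x2) w.\<close>
definition assoc_lhs ::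
  "(complex \<Rightarrow> 'w::ab_group_add \<Rightarrow> 'w) \<Rightarrow> ('v \<Rightarrow> 'v \<Rightarrow> int \<Rightarrow> 'v) \<Rightarrow> nat \<Rightarrow> ('v \<Rightarrow> 'w \<Rightarrow> int \<Rightarrow> 'w)
    \<Rightarrow> nat \<Rightarrow> 'v \<Rightarrow> 'v \<Rightarrow> 'w \<Rightarrow> int \<Rightarrow> int \<Rightarrow> 'w" where
  "assoc_lhs smulW Y T YW k u v w p m =
     Sum_any (\<lambda>q::nat. smulW (fps_nth ((fps_exp (1::complex) - 1) ^ k) q)
                          (YW (Y u v (int q - p - 1)) w (m - int T * int k)))"

text \<open>Coefficient of x0^p x2^(m/T) in F(x1,x2) with x1^(1/T) = (x2 e^x0)^(1/T), i.e.
  x1^(i/T) replaced by x2^(i/T) e^(i x0 / T).\<close>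
definition subst_x1 ::
  "(complex \<Rightarrow> 'w::ab_group_add \<Rightarrow> 'w) \<Rightarrow> nat \<Rightarrow> (int \<Rightarrow> int \<Rightarrow> 'w) \<Rightarrow> int \<Rightarrow> int \<Rightarrow> 'w" where
  "subst_x1 smulW T F p m =
     (if p < 0 then 0 else
        Sum_any (\<lambda>i::int. smulW ((of_int i / of_nat T) ^ nat p / of_nat (fact (nat p))) (F i (m - i))))"

text \<open>Coefficient of z^(e/T) x2^(c/T) in (z+1)^(l+r/T) Y_W(u,(z+1)x2) Y_W(v,x2) w, where
  (z+1)^a = sum_k (a choose k) z^(a-k) (expansion in nonnegative powers of 1).
  Index K is the total degree drop from the two binomial factors.\<close>
definition phi_lhs ::
  "(complex \<Rightarrow> 'w::ab_group_add \<Rightarrow> 'w) \<Rightarrow> nat \<Rightarrow> ('v \<Rightarrow> 'w \<Rightarrow> int \<Rightarrow> 'w)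
    \<Rightarrow> nat \<Rightarrow> nat \<Rightarrow> 'v \<Rightarrow> 'v \<Rightarrow> 'w \<Rightarrow> int \<Rightarrow> int \<Rightarrow> 'w" where
  "phi_lhs smulW T YW l r u v w e c =
     Sum_any (\<lambda>K::nat.
        let j = e - int l * int T - int r + int K * int T in
        smulW (\<Sum>k\<le>K. ((of_nat l + of_nat r / of_nat T :: complex) gchoose k)
                        * ((of_int j / of_nat T) gchoose (K - k)))
              (YW u (YW v w (c - j)) j))"

text \<open>Coefficient of z^(e/T) x2^(c/T) in (1+z)^(l+r/T) Y_W(Y(u, log(1+z)) v, x2) w,
  with (1+z)^a = sum_k (a choose k) z^k and log(1+z) = fps_ln 1.\<close>
definition phi_rhs ::
  "(complex \<Rightarrow> 'w::ab_group_add \<Rightarrow> 'w) \<Rightarrow> ('v \<Rightarrow> 'v \<Rightarrow> int \<Rightarrow> 'v) \<Rightarrow> nat \<Rightarrow> ('v \<Rightarrow> 'w \<Rightarrow> int \<Rightarrow> 'w)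
    \<Rightarrow> nat \<Rightarrow> nat \<Rightarrow> 'v \<Rightarrow> 'v \<Rightarrow> 'w \<Rightarrow> int \<Rightarrow> int \<Rightarrow> 'w" where
  "phi_rhs smulW Y T YW l r u v w e c =
     (if int T dvd e then
        Sum_any (\<lambda>(k::nat, n::int).
          smulW (((of_nat l + of_nat r / of_nat T :: complex) gchoose k)
                 * fls_nth ((fps_to_fls (fps_ln (1::complex))) powi (- n - 1)) (e div int T - int k))
                (YW (Y u v n) w c))
      else 0)"

end

theory Submission
  imports Defs
begin

definition EE :: "complex fps" where "EE = fps_exp 1 - 1"
definition LL :: "complex fps" where "LL = fps_ln 1"
definition lam :: "complex fps" where "lam = fps_shift 1 LL"
definition eps :: "complex fps" where "eps = fps_shift 1 EE"

lemma EE0 [simp]: "EE $ 0 = 0" by (simp add: EE_def)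
lemma LL0 [simp]: "LL $ 0 = 0" by (simp add: LL_def)
lemma EE_X: "EE = fps_X * eps"
  by (rule fps_ext) (simp add: eps_def fps_X_mult_nth)
lemma LL_X: "LL = fps_X * lam"
  by (rule fps_ext) (simp add: lam_def fps_X_mult_nth)
lemma lam0 [simp]: "lam $ 0 = 1" by (simp add: lam_def LL_def fps_ln_nth)
lemma eps0 [simp]: "eps $ 0 = 1" by (simp add: eps_def EE_def)

lemma LL_EE: "LL oo EE = fps_X"
  using fps_inv_fps_exp_compose(1)[of "1::complex"] fps_ln_fps_exp_inv[of "1::complex"]
  by (simp add: LL_def EE_def)
lemma EE_LL: "EE oo LL = fps_X"
  using fps_inv_fps_exp_compose(2)[of "1::complex"] fps_ln_fps_exp_inv[of "1::complex"]
  by (simp add: LL_def EE_def)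

lemma binom_EE: "fps_binomial a oo EE = fps_exp (a::complex)"
proof -
  let ?f = "fps_binomial a oo EE"
  have d: "fps_deriv EE = 1 + EE" by (simp add: EE_def)
  have B: "fps_deriv (fps_binomial a) * (1 + fps_X) = fps_const a * fps_binomial a"
    using fps_binomial_deriv[of a]
    by (simp add: fps_divide_def mult.assoc inverse_mult_eq_1)
  have "(fps_deriv (fps_binomial a) * (1 + fps_X)) oo EE = (fps_deriv (fps_binomial a) oo EE) * (1 + EE)"
    by (simp add: fps_compose_mult_distrib fps_compose_add_distrib)
  hence "fps_deriv ?f = fps_const a * ?f"
    using B by (simp add: fps_compose_deriv d fps_compose_mult_distrib)
  hence "?f = fps_const (?f $ 0) * fps_exp a" using fps_exp_unique_ODE by blast
  thus ?thesis by simp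
qed

lemma exp_LL: "fps_exp (a::complex) oo LL = fps_binomial a"
proof -
  have "fps_binomial a oo (EE oo LL) = (fps_binomial a oo EE) oo LL"
    by (rule fps_compose_assoc) simp_all
  thus ?thesis by (simp add: EE_LL binom_EE)
qed

lemma eps_lamE: "eps * (lam oo EE) = 1"
proof -
  have "fps_X * (eps * (lam oo EE)) = fps_X * 1"
    using LL_EE by (simp add: LL_X fps_compose_mult_distrib EE_X[symmetric] mult.assoc[symmetric])
  thus ?thesis by simp
qed

lemma lam_epsL: "lam * (eps oo LL) = 1"
proof -
  have "fps_X * (lam * (eps oo LL)) = fps_X * 1"
    using EE_LL by (simp add: EE_X fps_compose_mult_distrib LL_X[symmetric] mult.assoc[symmetric])
  thus ?thesis by simp
qed


lemma comp_coeff: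
  fixes F G b :: "complex fps"
  assumes b0: "b $ 0 = 0"
  shows "(G * (F oo b)) $ n = (\<Sum>i=0..n. F $ i * (G * b ^ i) $ n)"
proof -
  let ?P = "\<Sum>i=0..n. fps_const (F $ i) * b ^ i"
  have agree: "(F oo b) $ q = ?P $ q" if "q \<le> n" for q
  proof -
    have "?P $ q = (\<Sum>i=0..n. F $ i * (b ^ i) $ q)" by (simp add: fps_sum_nth)
    also have "\<dots> = (\<Sum>i=0..q. F $ i * (b ^ i) $ q)"
      using that startsby_zero_power_prefix[OF b0]
      by (intro sum.mono_neutral_right) auto
    finally show ?thesis by (simp add: fps_compose_nth)
  qed
  have "(G * (F oo b)) $ n = (G * ?P) $ n"
    unfolding fps_mult_nth by (intro sum.cong refl) (simp add: agree)
  also have "\<dots> = (\<Sum>i=0..n. F $ i * (G * b ^ i) $ n)"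
  proof -
    have h: "(G * (fps_const c * X)) $ n = c * (G * X) $ n" for c and X :: "complex fps"
      by (metis fps_mult_left_const_nth mult.left_commute)
    show ?thesis by (simp add: sum_distrib_left fps_sum_nth h)
  qed
  finally show ?thesis .
qed

definition Lam :: "int \<Rightarrow> complex fps" where
  "Lam m = (if m \<ge> 0 then lam ^ nat m else inverse lam ^ nat (- m))"

lemma lam_inv: "lam * inverse lam = 1" "inverse lam * lam = 1"
  by (simp_all add: inverse_mult_eq_1 inverse_mult_eq_1')

lemma subdeg_lam: "subdegree lam = 0" by (simp add: subdegree_eq_0_iff)

lemma fls_LL_powi: "fps_to_fls LL powi m = fls_X_intpow m * fps_to_fls (Lam m)"
proof -
  have "fps_to_fls LL = fls_X * fps_to_fls lam" by (simp add: LL_X fls_times_fps_to_fls)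
  hence "fps_to_fls LL powi m = fls_X_intpow m * fps_to_fls lam powi m"
    by (simp add: power_int_mult_distrib)
  moreover have "fps_to_fls lam powi m = fps_to_fls (Lam m)"
  proof (cases "m \<ge> 0")
    case True
    then obtain n where "m = int n" by (metis nonneg_int_cases)
    thus ?thesis by (simp add: Lam_def fps_to_fls_power)
  next
    case False
    have i: "inverse (fps_to_fls lam) = fps_to_fls (inverse lam)"
      by (rule fls_inverse_fps_to_fls[OF subdeg_lam])
    have "fps_to_fls lam powi m = inverse (fps_to_fls lam) ^ nat (- m)"
      using False by (simp only: power_int_def if_False)
    also have "\<dots> = fps_to_fls (inverse lam ^ nat (- m))" by (simp only: i fps_to_fls_power)
    also have "\<dots> = fps_to_fls (Lam m)" using False by (simp only: Lam_def if_False)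
    finally show ?thesis .
  qed
  ultimately show ?thesis by simp
qed

lemma fls_LL_nth: "fls_nth (fps_to_fls LL powi m) t = (if t < m then 0 else Lam m $ nat (t - m))"
  by (simp only: fls_LL_powi fls_X_intpow_times_conv_shift fls_shift_nth fps_to_fls_nth) simp

lemma lamE: "lam oo EE = inverse eps"
proof -
  have "inverse eps = inverse eps * (eps * (lam oo EE))" using eps_lamE by simp
  also have "\<dots> = lam oo EE" by (simp add: mult.assoc[symmetric] inverse_mult_eq_1)
  finally show ?thesis by simp
qed

lemma epsL: "eps oo LL = inverse lam"
proof -
  have "inverse lam = inverse lam * (lam * (eps oo LL))" using lam_epsL by simp
  also have "\<dots> = eps oo LL" by (simp add: mult.assoc[symmetric] inverse_mult_eq_1)
  finally show ?thesis by simp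
qed

lemma invlamE: "inverse lam oo EE = eps"
proof -
  have "(inverse lam oo EE) * (lam oo EE) = 1"
    by (simp add: fps_compose_mult_distrib[symmetric] lam_inv)
  hence "(inverse lam oo EE) * (lam oo EE) * eps = eps" by simp
  thus ?thesis by (simp add: lamE mult.assoc inverse_mult_eq_1)
qed

lemma inveps_L: "inverse eps oo LL = lam"
proof -
  have "(inverse eps oo LL) * (eps oo LL) = 1"
    by (simp add: fps_compose_mult_distrib[symmetric] inverse_mult_eq_1)
  hence "(inverse eps oo LL) * (eps oo LL) * lam = lam" by simp
  thus ?thesis by (simp add: epsL mult.assoc inverse_mult_eq_1)
qed

lemma S1a: "(\<Sum>e=0..p. (N gchoose e) * (fps_exp (-a) * EE ^ e) $ p) = (N - a) ^ p / fact p"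
proof -
  have "(fps_exp (-a) * (fps_binomial N oo EE)) $ p = (\<Sum>e=0..p. (N gchoose e) * (fps_exp (-a) * EE ^ e) $ p)"
    by (subst comp_coeff) simp_all
  moreover have "fps_exp (-a) * (fps_binomial N oo EE) = fps_exp (N - a)"
    by (simp add: binom_EE fps_exp_add_mult[symmetric])
  ultimately show ?thesis by simp
qed

lemma S2a: "(\<Sum>p=0..e. ((N - a) ^ p / fact p) * (fps_binomial a * LL ^ p) $ e) = (N gchoose e)"
proof -
  have "(fps_binomial a * (fps_exp (N - a) oo LL)) $ e = (\<Sum>p=0..e. ((N - a) ^ p / fact p) * (fps_binomial a * LL ^ p) $ e)"
    by (subst comp_coeff) simp_all
  moreover have "fps_binomial a * (fps_exp (N - a) oo LL) = fps_binomial N"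
    by (simp add: exp_LL fps_binomial_add_mult[symmetric])
  ultimately show ?thesis by simp
qed

definition Bt :: "complex \<Rightarrow> nat \<Rightarrow> int \<Rightarrow> complex fps" where
  "Bt a k n = fps_binomial a * fps_X ^ nat (int k - n - 1) * Lam (- n - 1)"

definition Et :: "nat \<Rightarrow> int \<Rightarrow> complex fps" where
  "Et k n = fps_X ^ nat (int k - n - 1) * eps ^ k"

lemma Lam_E: "Lam m oo EE = (if m \<ge> 0 then inverse eps ^ nat m else eps ^ nat (-m))"
  by (simp add: Lam_def fps_compose_power[symmetric] lamE invlamE)

lemma Lam_mul: "n < int k \<Longrightarrow> eps ^ nat (int k - n - 1) * (Lam (- n - 1) oo EE) = eps ^ k"
proof (cases "- n - 1 \<ge> 0")
  case True
  assume nk: "n < int k"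
  have e: "nat (int k - n - 1) = k + nat (- n - 1)" using True nk by simp
  have "eps ^ nat (- n - 1) * inverse eps ^ nat (- n - 1) = 1"
    by (simp add: power_mult_distrib[symmetric] inverse_mult_eq_1')
  thus ?thesis using True by (simp add: Lam_E e power_add mult.assoc)
next
  case False
  assume nk: "n < int k"
  have e: "k = nat (int k - n - 1) + nat (n + 1)" using False nk by simp
  have "eps ^ nat (int k - n - 1) * eps ^ nat (n + 1) = eps ^ k" by (metis e power_add)
  moreover have "nat (- (- n - 1)) = nat (n + 1)" by simp
  ultimately show ?thesis using False by (simp only: Lam_E if_False)
qed

lemma S1b_fps: "n < int k \<Longrightarrow> fps_exp (-a) * (Bt a k n oo EE) = Et k n"
proof -
  assume nk: "n < int k"
  have "Bt a k n oo EE = fps_exp a * EE ^ nat (int k - n - 1) * (Lam (- n - 1) oo EE)"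
    by (simp add: Bt_def fps_compose_mult_distrib fps_compose_power[symmetric] binom_EE)
  also have "\<dots> = fps_exp a * (fps_X * eps) ^ nat (int k - n - 1) * (Lam (- n - 1) oo EE)"
    by (simp only: EE_X)
  also have "\<dots> = fps_exp a * fps_X ^ nat (int k - n - 1) * (eps ^ nat (int k - n - 1) * (Lam (- n - 1) oo EE))"
    by (simp add: power_mult_distrib mult.assoc)
  also have "\<dots> = fps_exp a * Et k n" using Lam_mul[OF nk] by (simp add: Et_def mult.assoc)
  finally show ?thesis by (simp add: mult.assoc[symmetric] fps_exp_add_mult[symmetric])
qed

lemma S2b_fps: "n < int k \<Longrightarrow> fps_binomial a * (Et k n oo LL) = Bt a k n"
proof -
  assume nk: "n < int k"
  have "Et k n oo LL = LL ^ nat (int k - n - 1) * inverse lam ^ k"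
    by (simp add: Et_def fps_compose_mult_distrib fps_compose_power[symmetric] epsL)
  also have "\<dots> = (fps_X * lam) ^ nat (int k - n - 1) * inverse lam ^ k"
    by (simp only: LL_X)
  also have "\<dots> = fps_X ^ nat (int k - n - 1) * Lam (- n - 1)"
  proof (cases "- n - 1 \<ge> 0")
    case True
    have e: "nat (int k - n - 1) = k + nat (- n - 1)" using True nk by simp
    have "lam ^ k * inverse lam ^ k = 1"
      by (simp add: power_mult_distrib[symmetric] lam_inv)
    thus ?thesis using True
      by (simp add: Lam_def e power_add power_mult_distrib mult.assoc mult.left_commute)
  next
    case False
    have e: "k = nat (int k - n - 1) + nat (n + 1)" using False nk by simp
    have "lam ^ nat (int k - n - 1) * inverse lam ^ nat (int k - n - 1) = 1"
      by (simp add: power_mult_distrib[symmetric] lam_inv)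
    hence "lam ^ nat (int k - n - 1) * inverse lam ^ k = inverse lam ^ nat (n + 1)"
      by (subst e) (simp add: power_add mult.assoc[symmetric])
    moreover have "nat (- (- n - 1)) = nat (n + 1)" by simp
    ultimately show ?thesis using False
      by (simp only: Lam_def power_mult_distrib mult.assoc if_False)
  qed
  finally show ?thesis by (simp add: Bt_def mult.assoc)
qed

lemma S1b: "n < int k \<Longrightarrow>
  (\<Sum>e=0..p. (Bt a k n) $ e * (fps_exp (-a) * EE ^ e) $ p) = (Et k n) $ p"
  by (subst comp_coeff[symmetric]) (simp_all add: S1b_fps)

lemma S2b: "n < int k \<Longrightarrow>
  (\<Sum>p=0..e. (Et k n) $ p * (fps_binomial a * LL ^ p) $ e) = (Bt a k n) $ e"
  by (subst comp_coeff[symmetric]) (simp_all add: S2b_fps)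

lemma Et_nth: "n < int k \<Longrightarrow> Et k n $ p = (if n + int p + 1 < 0 then 0 else (EE ^ k) $ nat (n + int p + 1))"
proof -
  assume nk: "n < int k"
  have "Et k n $ p = (if p < nat (int k - n - 1) then 0 else (eps ^ k) $ (p - nat (int k - n - 1)))"
    by (simp add: Et_def fps_X_power_mult_nth)
  moreover have "(EE ^ k) $ q = (if q < k then 0 else (eps ^ k) $ (q - k))" for q
    by (simp add: EE_X power_mult_distrib fps_X_power_mult_nth)
  moreover have "p < nat (int k - n - 1) \<longleftrightarrow> (n + int p + 1 < 0 \<or> nat (n + int p + 1) < k)" using nk by linarith
  moreover have "\<not> p < nat (int k - n - 1) \<Longrightarrow> p - nat (int k - n - 1) = nat (n + int p + 1) - k" using nk by linarith
  ultimately show ?thesis by auto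
qed

lemma SA_eq_sum: "finite I \<Longrightarrow> (\<And>x. x \<notin> I \<Longrightarrow> f x = 0) \<Longrightarrow> Sum_any f = sum f I"
  by (rule Sum_any.expand_superset) auto

lemma fin_int_supp: "(\<And>x::int. x < a \<or> x > b \<Longrightarrow> f x = 0) \<Longrightarrow> finite {x. f x \<noteq> 0}"
  by (rule finite_subset[of _ "{a..b}"]) (auto simp: not_less[symmetric])

lemma fin_nat_supp: "(\<And>x::nat. x > b \<Longrightarrow> f x = 0) \<Longrightarrow> finite {x. f x \<noteq> 0}"
  by (rule finite_subset[of _ "{..b}"]) (auto simp: not_less[symmetric])

lemma SA_sum_swap:
  fixes f :: "'i \<Rightarrow> 'x \<Rightarrow> 'a::comm_monoid_add"
  assumes "finite E" "\<And>e. e \<in> E \<Longrightarrow> finite {x. f e x \<noteq> 0}"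
  shows "Sum_any (\<lambda>x. \<Sum>e\<in>E. f e x) = (\<Sum>e\<in>E. Sum_any (f e))"
  using assms
proof (induction E rule: finite_induct)
  case empty thus ?case by simp
next
  case (insert e E)
  have fin: "finite {x. (\<Sum>e\<in>E. f e x) \<noteq> 0}"
  proof (rule finite_subset[of _ "\<Union>e\<in>E. {x. f e x \<noteq> 0}"])
    show "{x. (\<Sum>e\<in>E. f e x) \<noteq> 0} \<subseteq> (\<Union>e\<in>E. {x. f e x \<noteq> 0})"
      by (auto elim: sum.not_neutral_contains_not_neutral)
    show "finite (\<Union>e\<in>E. {x. f e x \<noteq> 0})" using insert by auto
  qed
  have "Sum_any (\<lambda>x. \<Sum>e\<in>insert e E. f e x) = Sum_any (\<lambda>x. f e x + (\<Sum>e\<in>E. f e x))"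
    using insert by simp
  also have "\<dots> = Sum_any (f e) + Sum_any (\<lambda>x. \<Sum>e\<in>E. f e x)"
    by (rule Sum_any.distrib) (use insert fin in auto)
  finally show ?case using insert by simp
qed

lemma SA_shift: "Sum_any (f :: int \<Rightarrow> 'a::comm_monoid_add) = Sum_any (\<lambda>t. f (t + c))"
  by (rule Sum_any.reindex_cong[of "\<lambda>t. t + c"]) (auto simp: bij_def inj_def surj_def intro: exI[of _ "_ - c"])

lemma SA_nat_int:
  fixes f :: "nat \<Rightarrow> 'a::comm_monoid_add"
  assumes M: "\<And>q. q \<ge> M \<Longrightarrow> f q = 0"
  shows "Sum_any f = Sum_any (\<lambda>n::int. if n \<ge> c then f (nat (n - c)) else 0)"
proof -
  let ?g = "\<lambda>n::int. if n \<ge> c then f (nat (n - c)) else 0"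
  have "Sum_any f = sum f {..<M}" using M by (intro SA_eq_sum) auto
  also have "\<dots> = sum (?g \<circ> (\<lambda>q. int q + c)) {..<M}" by (intro sum.cong) auto
  also have "\<dots> = sum ?g ((\<lambda>q. int q + c) ` {..<M})" by (rule sum.reindex[symmetric]) (auto simp: inj_on_def)
  also have "\<dots> = Sum_any ?g"
  proof (rule SA_eq_sum[symmetric])
    fix n assume n: "n \<notin> (\<lambda>q. int q + c) ` {..<M}"
    show "?g n = 0"
    proof (cases "n \<ge> c")
      case True
      have "nat (n - c) \<ge> M"
      proof (rule ccontr)
        assume "\<not> ?thesis"
        hence "n \<in> (\<lambda>q. int q + c) ` {..<M}" using True by (auto intro!: image_eqI[of _ _ "nat (n - c)"])
        thus False using n by blast
      qed
      thus ?thesis using True M by simp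
    qed simp
  qed simp
  finally show ?thesis .
qed

definition Cinf :: "int \<Rightarrow> int \<Rightarrow> complex" where
  "Cinf n e = (if e \<le> n then (of_int n :: complex) gchoose nat (n - e) else 0)"

lemma Cinf_pascal: "Cinf (x + 1) e = Cinf x e + Cinf x (e - 1)"
proof (cases "e \<le> x")
  case True
  have "nat (x + 1 - e) = Suc (nat (x - e))" "nat (x - (e - 1)) = Suc (nat (x - e))" using True by auto
  moreover have "(of_int x + 1 :: complex) gchoose Suc j = (of_int x gchoose j) + (of_int x gchoose Suc j)" for j
    by (rule gbinomial_Suc_Suc)
  ultimately show ?thesis using True by (simp add: Cinf_def)
next
  case False
  thus ?thesis by (cases "e = x + 1") (auto simp: Cinf_def)
qed

lemma Cinf_nonneg: "n \<ge> 0 \<Longrightarrow> Cinf n e = (if e < 0 then 0 else (of_int n :: complex) gchoose nat e)"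
proof -
  assume "n \<ge> 0"
  then obtain N where N: "n = int N" by (metis nonneg_int_cases)
  have g: "(of_nat N :: complex) gchoose j = of_nat (N choose j)" for j
    by (simp add: binomial_gbinomial)
  show ?thesis
  proof (cases "e < 0")
    case True
    hence "N < nat (int N - e)" by simp
    thus ?thesis using True by (simp add: Cinf_def N g binomial_eq_0)
  next
    case False
    show ?thesis
    proof (cases "e \<le> n")
      case True
      have E: "nat (n - e) = N - nat e" "nat e \<le> N" using False True N by auto
      hence "N choose nat (n - e) = N choose nat e" using binomial_symmetric[of "nat e" N] by simp
      thus ?thesis using True False by (simp add: Cinf_def N g)
    next
      case False2: False
      hence "N < nat e" using N by simp
      thus ?thesis using False False2 by (simp add: Cinf_def N g binomial_eq_0)
    qed
  qed
qed

lemma Tdiff_step: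
  fixes g :: "int \<Rightarrow> complex"
  shows "(\<Sum>m\<le>Suc k. (-1)^m * of_nat (Suc k choose m) * g (y - int m))
       = (\<Sum>m\<le>k. (-1)^m * of_nat (k choose m) * g (y - int m))
       - (\<Sum>m\<le>k. (-1)^m * of_nat (k choose m) * g (y - 1 - int m))"
proof -
  have A: "(\<Sum>m\<le>Suc k. (-1)^m * of_nat (Suc k choose m) * g (y - int m))
     = g y + (\<Sum>m\<le>k. (-1)^(Suc m) * (of_nat (k choose m) + of_nat (k choose Suc m)) * g (y - 1 - int m))"
    by (subst sum.atMost_Suc_shift) (simp add: algebra_simps)
  have B: "(\<Sum>m\<le>k. (-1)^m * of_nat (k choose m) * g (y - int m))
     = g y + (\<Sum>m\<le>k. (-1)^(Suc m) * of_nat (k choose Suc m) * g (y - 1 - int m))"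
  proof -
    have "(\<Sum>m\<le>k. (-1)^m * of_nat (k choose m) * g (y - int m))
       = (\<Sum>m\<le>Suc k. (-1)^m * of_nat (k choose m) * g (y - int m))" by simp
    also have "\<dots> = g y + (\<Sum>m\<le>k. (-1)^(Suc m) * of_nat (k choose Suc m) * g (y - 1 - int m))"
      by (subst sum.atMost_Suc_shift) (simp add: algebra_simps)
    finally show ?thesis .
  qed
  show ?thesis unfolding A B
    by (simp add: algebra_simps sum.distrib sum_subtractf sum_negf)
qed

lemma Tdiff_Cinf:
  "(\<Sum>m\<le>k. (-1)^m * of_nat (k choose m) * Cinf (y - int m) e) = Cinf (y - int k) (e - int k)"
proof (induction k arbitrary: y e)
  case 0 thus ?case by simp
next
  case (Suc k)
  have "(\<Sum>m\<le>Suc k. (-1)^m * of_nat (Suc k choose m) * Cinf (y - int m) e)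
      = Cinf (y - int k) (e - int k) - Cinf (y - 1 - int k) (e - int k)"
    using Tdiff_step[of k "\<lambda>x. Cinf x e" y] Suc.IH[of y e] Suc.IH[of "y - 1" e] by simp
  also have "\<dots> = Cinf (y - 1 - int k) (e - int k - 1)"
    using Cinf_pascal[of "y - 1 - int k" "e - int k"] by simp
  finally show ?case by (simp add: algebra_simps)
qed

definition Dk :: "(complex \<Rightarrow> 'w \<Rightarrow> 'w) \<Rightarrow> nat \<Rightarrow> (int \<Rightarrow> 'w::ab_group_add) \<Rightarrow> int \<Rightarrow> 'w" where
  "Dk sc k H s = (\<Sum>m\<le>k. sc ((-1)^m * of_nat (k choose m)) (H (s - int k + int m)))"

definition Pb :: "(complex \<Rightarrow> 'w \<Rightarrow> 'w) \<Rightarrow> nat \<Rightarrow> (int \<Rightarrow> 'w::ab_group_add) \<Rightarrow> int \<Rightarrow> 'w" where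
  "Pb sc l D e = Sum_any (\<lambda>s. sc (Cinf (int l + s) e) (D s))"

definition Bc :: "complex \<Rightarrow> nat \<Rightarrow> int \<Rightarrow> int \<Rightarrow> complex" where
  "Bc a k e n = (if e < 0 then 0 else Bt a k n $ nat e)"

definition Rb :: "(complex \<Rightarrow> 'w \<Rightarrow> 'w) \<Rightarrow> complex \<Rightarrow> nat \<Rightarrow> (int \<Rightarrow> 'w::ab_group_add) \<Rightarrow> int \<Rightarrow> 'w" where
  "Rb sc a k A e = Sum_any (\<lambda>n. sc (Bc a k e n) (A n))"

definition LA :: "(complex \<Rightarrow> 'w \<Rightarrow> 'w) \<Rightarrow> nat \<Rightarrow> (int \<Rightarrow> 'w::ab_group_add) \<Rightarrow> int \<Rightarrow> 'w" where
  "LA sc k A p = Sum_any (\<lambda>q::nat. sc ((EE ^ k) $ q) (A (int q - p - 1)))"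

definition RA :: "(complex \<Rightarrow> 'w \<Rightarrow> 'w) \<Rightarrow> complex \<Rightarrow> (int \<Rightarrow> 'w::ab_group_add) \<Rightarrow> int \<Rightarrow> 'w" where
  "RA sc \<rho> D p = (if p < 0 then 0 else
     Sum_any (\<lambda>s. sc ((of_int s - \<rho>) ^ nat p / of_nat (fact (nat p))) (D s)))"

locale cvs = vector_space scale for scale :: "complex \<Rightarrow> 'w::ab_group_add \<Rightarrow> 'w"
begin

lemma SA_scale: "finite {x. f x \<noteq> 0} \<Longrightarrow> scale c (Sum_any f) = Sum_any (\<lambda>x. scale c (f x))"
  by (subst (1 2) Sum_any.expand_superset[of "{x. f x \<noteq> 0}"]) (auto simp: scale_sum_right)

lemma SA_scale_left: "finite {x. g x \<noteq> 0} \<Longrightarrow> scale (Sum_any g) v = Sum_any (\<lambda>x. scale (g x) v)"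
  by (subst (1 2) Sum_any.expand_superset[of "{x. g x \<noteq> 0}"]) (auto simp: scale_sum_left)

lemma VZ:
  assumes HS: "\<And>s. s > S \<Longrightarrow> H s = 0"
  shows "Pb scale l (Dk scale k H) e = Pb scale l H (e - int k)"
proof -
  define c where "c m = ((-1)^m * of_nat (k choose m) :: complex)" for m
  have "Pb scale l (Dk scale k H) e
      = Sum_any (\<lambda>s. \<Sum>m\<le>k. scale (Cinf (int l + s) e * c m) (H (s - int k + int m)))"
    unfolding Pb_def Dk_def c_def by (simp add: scale_sum_right)
  also have "\<dots> = (\<Sum>m\<le>k. Sum_any (\<lambda>s. scale (Cinf (int l + s) e * c m) (H (s - int k + int m))))"
  proof (rule SA_sum_swap)
    fix m assume "m \<in> {..k}"
    show "finite {s. scale (Cinf (int l + s) e * c m) (H (s - int k + int m)) \<noteq> 0}"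
      by (rule fin_int_supp[of "e - int l" "S + int k"]) (auto simp: Cinf_def HS \<open>m \<in> {..k}\<close>)
  qed simp
  also have "\<dots> = (\<Sum>m\<le>k. Sum_any (\<lambda>t. scale (c m * Cinf (int l + t + int k - int m) e) (H t)))"
  proof (rule sum.cong[OF refl])
    fix m assume "m \<in> {..k}"
    show "Sum_any (\<lambda>s. scale (Cinf (int l + s) e * c m) (H (s - int k + int m)))
        = Sum_any (\<lambda>t. scale (c m * Cinf (int l + t + int k - int m) e) (H t))"
      by (subst SA_shift[of _ "int k - int m"]) (simp add: algebra_simps)
  qed
  also have "\<dots> = Sum_any (\<lambda>t. \<Sum>m\<le>k. scale (c m * Cinf (int l + t + int k - int m) e) (H t))"
  proof (rule SA_sum_swap[symmetric])
    fix m assume "m \<in> {..k}"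
    thus "finite {t. scale (c m * Cinf (int l + t + int k - int m) e) (H t) \<noteq> 0}"
      by (intro fin_int_supp[of "e - int l - int k" S]) (auto simp: Cinf_def HS)
  qed simp
  also have "\<dots> = Sum_any (\<lambda>t. scale (Cinf (int l + t) (e - int k)) (H t))"
  proof (rule Sum_any.cong)
    fix t
    have "(\<Sum>m\<le>k. c m * Cinf (int l + t + int k - int m) e) = Cinf (int l + t) (e - int k)"
      using Tdiff_Cinf[of k "int l + t + int k" e] by (simp add: c_def)
    thus "(\<Sum>m\<le>k. scale (c m * Cinf (int l + t + int k - int m) e) (H t)) = scale (Cinf (int l + t) (e - int k)) (H t)"
      by (simp add: scale_sum_left[symmetric])
  qed
  finally show ?thesis by (simp add: Pb_def)
qed

end

lemma EEk_low: "q < k \<Longrightarrow> (EE ^ k) $ q = 0"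
  using startsby_zero_power_prefix[OF EE0] by blast

lemma EEk_k: "(EE ^ k) $ k = 1"
proof -
  have "(EE ^ k) $ k = (fps_X ^ k * eps ^ k) $ k" by (simp add: EE_X power_mult_distrib)
  also have "\<dots> = 1" by (simp add: fps_X_power_mult_nth fps_power_zeroth)
  finally show ?thesis .
qed

lemma Bt_low: "e < nat (int k - n - 1) \<Longrightarrow> Bt a k n $ e = 0"
proof -
  assume e: "e < nat (int k - n - 1)"
  have "Bt a k n = fps_X ^ nat (int k - n - 1) * (fps_binomial a * Lam (- n - 1))"
    by (simp add: Bt_def mult.commute mult.left_commute)
  thus ?thesis using e by (simp add: fps_X_power_mult_nth)
qed

lemma Et_low: "p < nat (int k - n - 1) \<Longrightarrow> Et k n $ p = 0"
  by (simp add: Et_def fps_X_power_mult_nth)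

lemma Cinf_self: "Cinf n n = 1" by (simp add: Cinf_def)

lemma Cinf_low: "n < e \<Longrightarrow> Cinf n e = 0" by (simp add: Cinf_def)

context cvs
begin

lemma Dk_up: "(\<And>s. s > S \<Longrightarrow> H s = 0) \<Longrightarrow> s > S + int k \<Longrightarrow> Dk scale k H s = 0"
  by (simp add: Dk_def)

lemma LA_neg:
  assumes Ak: "\<And>n. n \<ge> int k \<Longrightarrow> A n = 0" and p: "p < 0"
  shows "LA scale k A p = 0"
proof -
  have "(\<lambda>q. scale ((EE ^ k) $ q) (A (int q - p - 1))) = (\<lambda>q. 0)"
  proof
    fix q show "scale ((EE ^ k) $ q) (A (int q - p - 1)) = 0"
      using Ak[of "int q - p - 1"] p by (cases "q < k") (auto simp: EEk_low)
  qed
  thus ?thesis unfolding LA_def by (simp only: Sum_any.neutral)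
qed

lemma LA_alt:
  assumes Ak: "\<And>n. n \<ge> int k \<Longrightarrow> A n = 0" and p: "p \<ge> 0"
  shows "LA scale k A p = Sum_any (\<lambda>n. scale (Et k n $ nat p) (A n))"
proof -
  let ?f = "\<lambda>q::nat. scale ((EE ^ k) $ q) (A (int q - p - 1))"
  have "LA scale k A p = Sum_any ?f" by (simp add: LA_def)
  also have "\<dots> = Sum_any (\<lambda>n::int. if n \<ge> - p - 1 then ?f (nat (n - (- p - 1))) else 0)"
    by (rule SA_nat_int[of "nat (int k + p + 1)"]) (auto simp: Ak)
  also have "\<dots> = Sum_any (\<lambda>n. scale (Et k n $ nat p) (A n))"
  proof (rule Sum_any.cong)
    fix n
    show "(if n \<ge> - p - 1 then ?f (nat (n - (- p - 1))) else 0) = scale (Et k n $ nat p) (A n)"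
    proof (cases "n < int k")
      case True
      have eq: "nat (n - (- p - 1)) = nat (n + p + 1)" by (rule arg_cong[where f=nat]) simp
      show ?thesis using p True by (simp only: eq) (auto simp: Et_nth)
    qed (simp add: Ak)
  qed
  finally show ?thesis .
qed

lemma Rb_neg: "e < 0 \<Longrightarrow> Rb scale a k A e = 0"
  by (simp add: Rb_def Bc_def)

lemma Rb_fin:
  assumes Ak: "\<And>n. n \<ge> int k \<Longrightarrow> A n = 0"
  shows "finite {n. scale (c * Bc a k e n) (A n) \<noteq> 0}"
proof (rule fin_int_supp[of "int k - 1 - e" "int k"])
  fix n assume "n < int k - 1 - e \<or> n > int k"
  thus "scale (c * Bc a k e n) (A n) = 0"
  proof
    assume n: "n < int k - 1 - e"
    show ?thesis
    proof (cases "e < 0")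
      case False
      hence "nat e < nat (int k - n - 1)" using n by linarith
      thus ?thesis using False by (simp add: Bc_def Bt_low)
    qed (simp add: Bc_def)
  qed (simp add: Ak)
qed

lemma core2:
  assumes HS: "\<And>s. s > S \<Longrightarrow> H s = 0"
    and Ak: "\<And>n. n \<ge> int k \<Longrightarrow> A n = 0"
    and B: "\<And>e. Pb scale l H e = Rb scale a k A (e + int k)"
    and a: "a = of_nat l + \<rho>"
  shows "(\<forall>s. int l + s < 0 \<longrightarrow> Dk scale k H s = 0) \<and> (\<forall>p. LA scale k A p = RA scale \<rho> (Dk scale k H) p)"
proof -
  define D where "D = Dk scale k H"
  have DS: "s > S + int k \<Longrightarrow> D s = 0" for s using Dk_up[OF HS] by (simp add: D_def)
  have P: "Pb scale l D e = Rb scale a k A e" for e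
    using VZ[OF HS, where l=l and k=k and e=e] B[of "e - int k"] by (simp add: D_def)
  have tri: "D (- int l - int (Suc j)) = 0" for j
  proof (induction j rule: less_induct)
    case (less j)
    let ?s = "- int l - int (Suc j)"
    let ?e = "- int (Suc j)"
    have "Pb scale l D ?e = Sum_any (\<lambda>s. if s = ?s then D s else 0)"
      unfolding Pb_def
    proof (rule Sum_any.cong)
      fix s
      show "scale (Cinf (int l + s) ?e) (D s) = (if s = ?s then D s else 0)"
      proof (cases "s = ?s")
        case True thus ?thesis by (simp add: Cinf_self)
      next
        case False
        show ?thesis
        proof (cases "int l + s < ?e")
          case True thus ?thesis using False by (simp add: Cinf_low)
        next
          case False2: False
          show ?thesis
          proof (cases "int l + s \<ge> 0")
            case True thus ?thesis using False by (simp add: Cinf_nonneg)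
          next
            case False3: False
            define j' where "j' = nat (- (int l + s)) - 1"
            have "j' < j" "s = - int l - int (Suc j')" using False False2 False3 by (auto simp: j'_def)
            thus ?thesis using less.IH[of j'] False by simp
          qed
        qed
      qed
    qed
    also have "\<dots> = D ?s" by simp
    finally show ?case using P[of ?e] Rb_neg[of ?e] by simp
  qed
  have D0: "int l + s < 0 \<Longrightarrow> D s = 0" for s
    using tri[of "nat (- (int l + s)) - 1"] by (simp add: algebra_simps)
  have LR: "LA scale k A p = RA scale \<rho> D p" for p
  proof (cases "p < 0")
    case True thus ?thesis using LA_neg[OF Ak True] by (simp add: RA_def)
  next
    case False
    define pn where "pn = nat p"
    define \<gamma> where "\<gamma> e = (fps_exp (-a) * EE ^ e) $ pn" for e
    have step1: "scale ((of_int s - \<rho>) ^ pn / fact pn) (D s)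
        = (\<Sum>e=0..pn. scale (\<gamma> e * Cinf (int l + s) (int e)) (D s))" for s
    proof (cases "int l + s \<ge> 0")
      case True
      have "(\<Sum>e=0..pn. (of_int (int l + s) gchoose e) * \<gamma> e) = (of_int (int l + s) - a) ^ pn / fact pn"
        unfolding \<gamma>_def by (rule S1a)
      moreover have "of_nat l + of_int s - a = of_int s - \<rho>" by (simp add: a)
      ultimately have "(\<Sum>e=0..pn. \<gamma> e * Cinf (int l + s) (int e)) = (of_int s - \<rho>) ^ pn / fact pn"
        using True by (simp add: Cinf_nonneg mult.commute)
      thus ?thesis by (simp add: scale_sum_left[symmetric])
    qed (simp add: D0)
    have "RA scale \<rho> D p = Sum_any (\<lambda>s. \<Sum>e=0..pn. scale (\<gamma> e * Cinf (int l + s) (int e)) (D s))"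
      using False by (simp add: RA_def pn_def[symmetric] step1)
    also have "\<dots> = (\<Sum>e=0..pn. Sum_any (\<lambda>s. scale (\<gamma> e * Cinf (int l + s) (int e)) (D s)))"
    proof (rule SA_sum_swap)
      fix e
      show "finite {s. scale (\<gamma> e * Cinf (int l + s) (int e)) (D s) \<noteq> 0}"
        by (rule fin_int_supp[of "- int l" "S + int k"]) (auto simp: DS D0)
    qed simp
    also have "\<dots> = (\<Sum>e=0..pn. scale (\<gamma> e) (Pb scale l D (int e)))"
    proof (rule sum.cong[OF refl])
      fix e
      have "finite {s. scale (Cinf (int l + s) (int e)) (D s) \<noteq> 0}"
        by (rule fin_int_supp[of "- int l" "S + int k"]) (auto simp: DS D0)
      thus "Sum_any (\<lambda>s. scale (\<gamma> e * Cinf (int l + s) (int e)) (D s)) = scale (\<gamma> e) (Pb scale l D (int e))"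
        by (simp add: Pb_def SA_scale)
    qed
    also have "\<dots> = (\<Sum>e=0..pn. Sum_any (\<lambda>n. scale (\<gamma> e * Bc a k (int e) n) (A n)))"
    proof (rule sum.cong[OF refl])
      fix e
      show "scale (\<gamma> e) (Pb scale l D (int e)) = Sum_any (\<lambda>n. scale (\<gamma> e * Bc a k (int e) n) (A n))"
        using Rb_fin[OF Ak, where c=1 and a=a and e="int e"] by (simp add: P Rb_def SA_scale)
    qed
    also have "\<dots> = Sum_any (\<lambda>n. \<Sum>e=0..pn. scale (\<gamma> e * Bc a k (int e) n) (A n))"
    proof (rule SA_sum_swap[symmetric])
      fix e
      show "finite {n. scale (\<gamma> e * Bc a k (int e) n) (A n) \<noteq> 0}" by (rule Rb_fin[OF Ak])
    qed simp
    also have "\<dots> = Sum_any (\<lambda>n. scale (Et k n $ pn) (A n))"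
    proof (rule Sum_any.cong)
      fix n
      show "(\<Sum>e=0..pn. scale (\<gamma> e * Bc a k (int e) n) (A n)) = scale (Et k n $ pn) (A n)"
      proof (cases "n < int k")
        case True
        have "(\<Sum>e=0..pn. \<gamma> e * Bc a k (int e) n) = Et k n $ pn"
          using S1b[OF True, where p=pn and a=a] by (simp add: Bc_def \<gamma>_def mult.commute)
        thus ?thesis by (simp add: scale_sum_left[symmetric])
      qed (simp add: Ak)
    qed
    also have "\<dots> = LA scale k A p" using LA_alt[OF Ak] False by (simp add: pn_def)
    finally show ?thesis by simp
  qed
  show ?thesis using D0 LR by (simp add: D_def)
qed

end

context cvs
begin

lemma core1_Ak:
  assumes AN: "\<And>n. n \<ge> N0 \<Longrightarrow> A n = 0"
    and AB: "\<And>p. p < 0 \<Longrightarrow> LA scale k A p = 0"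
  shows "\<And>n. n \<ge> int k \<Longrightarrow> A n = 0"
proof (rule ccontr)
  fix n assume n: "n \<ge> int k" "A n \<noteq> 0"
  define M where "M = {n. n \<ge> int k \<and> A n \<noteq> 0}"
  have "M \<subseteq> {int k..N0}"
  proof
    fix x assume "x \<in> M"
    thus "x \<in> {int k..N0}" using AN[of x] by (cases "x \<ge> N0") (auto simp: M_def)
  qed
  hence finM: "finite M" by (rule finite_subset) simp
  have "n \<in> M" using n by (simp add: M_def)
  define n0 where "n0 = Max M"
  have n0M: "n0 \<in> M" using \<open>n \<in> M\<close> finM by (auto simp: n0_def intro: Max_in)
  have above: "m > n0 \<Longrightarrow> m \<ge> int k \<Longrightarrow> A m = 0" for m
    using Max_ge[OF finM, of m] by (auto simp: M_def n0_def)
  let ?p = "int k - n0 - 1"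
  have p: "?p < 0" using n0M by (simp add: M_def)
  have "LA scale k A ?p = Sum_any (\<lambda>q. if q = k then A n0 else 0)"
    unfolding LA_def
  proof (rule Sum_any.cong)
    fix q
    show "scale ((EE ^ k) $ q) (A (int q - ?p - 1)) = (if q = k then A n0 else 0)"
    proof (cases "q < k")
      case True thus ?thesis by (simp add: EEk_low)
    next
      case False
      show ?thesis
      proof (cases "q = k")
        case True thus ?thesis by (simp add: EEk_k)
      next
        case False2: False
        have "A (int q - ?p - 1) = 0" using False False2 n0M by (intro above) (auto simp: M_def)
        thus ?thesis using False2 by simp
      qed
    qed
  qed
  also have "\<dots> = A n0" by simp
  finally show False using AB[OF p] n0M by (simp add: M_def)
qed

lemma core1:
  assumes HS: "\<And>s. s > S \<Longrightarrow> H s = 0"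
    and AN: "\<And>n. n \<ge> N0 \<Longrightarrow> A n = 0"
    and D0: "\<And>s. s < s0 \<Longrightarrow> Dk scale k H s = 0"
    and ls: "int l + s0 \<ge> 0"
    and AB: "\<And>p. LA scale k A p = RA scale \<rho> (Dk scale k H) p"
    and a: "a = of_nat l + \<rho>"
  shows "(\<forall>n. n \<ge> int k \<longrightarrow> A n = 0) \<and> (\<forall>e. Pb scale l H e = Rb scale a k A (e + int k))"
proof -
  define D where "D = Dk scale k H"
  have DS: "s > S + int k \<Longrightarrow> D s = 0" for s using Dk_up[OF HS] by (simp add: D_def)
  have D0': "s < s0 \<Longrightarrow> D s = 0" for s using D0 by (simp add: D_def)
  have neg: "\<And>p. p < 0 \<Longrightarrow> LA scale k A p = 0" using AB by (simp add: RA_def)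
  have Ak: "n \<ge> int k \<Longrightarrow> A n = 0" for n
    using core1_Ak[OF AN neg] by blast
  have P: "Pb scale l D e = Rb scale a k A e" for e
  proof (cases "e < 0")
    case True
    have "(\<lambda>s. scale (Cinf (int l + s) e) (D s)) = (\<lambda>s. 0)"
    proof
      fix s show "scale (Cinf (int l + s) e) (D s) = 0"
        using True ls D0'[of s] by (cases "s < s0") (auto simp: Cinf_nonneg)
    qed
    hence "Pb scale l D e = 0" unfolding Pb_def by (simp only: Sum_any.neutral)
    thus ?thesis using Rb_neg[OF True] by simp
  next
    case False
    define en where "en = nat e"
    have e: "e = int en" using False by (simp add: en_def)
    define \<delta> where "\<delta> p = (fps_binomial a * LL ^ p) $ en" for p
    define cp where "cp p s = (of_int s - \<rho>) ^ p / fact p" for p and s :: int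
    have step1: "scale (Cinf (int l + s) e) (D s) = (\<Sum>p=0..en. scale (\<delta> p * cp p s) (D s))" for s
    proof (cases "s < s0")
      case False
      hence nn: "int l + s \<ge> 0" using ls by simp
      have "(\<Sum>p=0..en. ((of_int (int l + s) - a) ^ p / fact p) * \<delta> p) = (of_int (int l + s) gchoose en)"
        unfolding \<delta>_def by (rule S2a)
      moreover have "of_nat l + of_int s - a = of_int s - \<rho>" by (simp add: a)
      ultimately have "(\<Sum>p=0..en. \<delta> p * cp p s) = Cinf (int l + s) e"
        using nn by (simp add: Cinf_nonneg e cp_def mult.commute)
      thus ?thesis by (simp add: scale_sum_left[symmetric])
    qed (simp add: D0')
    have "Pb scale l D e = Sum_any (\<lambda>s. \<Sum>p=0..en. scale (\<delta> p * cp p s) (D s))"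
      by (simp add: Pb_def step1)
    also have "\<dots> = (\<Sum>p=0..en. Sum_any (\<lambda>s. scale (\<delta> p * cp p s) (D s)))"
    proof (rule SA_sum_swap)
      fix p
      show "finite {s. scale (\<delta> p * cp p s) (D s) \<noteq> 0}"
        by (rule fin_int_supp[of s0 "S + int k"]) (auto simp: DS D0')
    qed simp
    also have "\<dots> = (\<Sum>p=0..en. scale (\<delta> p) (LA scale k A (int p)))"
    proof (rule sum.cong[OF refl])
      fix p
      have "finite {s. scale (cp p s) (D s) \<noteq> 0}"
        by (rule fin_int_supp[of s0 "S + int k"]) (auto simp: DS D0')
      thus "Sum_any (\<lambda>s. scale (\<delta> p * cp p s) (D s)) = scale (\<delta> p) (LA scale k A (int p))"
        by (simp add: AB RA_def cp_def D_def[symmetric] SA_scale)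
    qed
    also have "\<dots> = (\<Sum>p=0..en. Sum_any (\<lambda>n. scale (\<delta> p * Et k n $ p) (A n)))"
    proof (rule sum.cong[OF refl])
      fix p
      have "finite {n. scale (Et k n $ p) (A n) \<noteq> 0}"
      proof (rule fin_int_supp[of "int k - 1 - int p" "int k"])
        fix n assume "n < int k - 1 - int p \<or> n > int k"
        thus "scale (Et k n $ p) (A n) = 0"
        proof
          assume "n < int k - 1 - int p"
          hence "p < nat (int k - n - 1)" by linarith
          thus ?thesis by (simp add: Et_low)
        qed (simp add: Ak)
      qed
      thus "scale (\<delta> p) (LA scale k A (int p)) = Sum_any (\<lambda>n. scale (\<delta> p * Et k n $ p) (A n))"
        using LA_alt[OF Ak, where p="int p"] by (simp add: SA_scale)
    qed
    also have "\<dots> = Sum_any (\<lambda>n. \<Sum>p=0..en. scale (\<delta> p * Et k n $ p) (A n))"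
    proof (rule SA_sum_swap[symmetric])
      fix p
      show "finite {n. scale (\<delta> p * Et k n $ p) (A n) \<noteq> 0}"
      proof (rule fin_int_supp[of "int k - 1 - int p" "int k"])
        fix n assume "n < int k - 1 - int p \<or> n > int k"
        thus "scale (\<delta> p * Et k n $ p) (A n) = 0"
        proof
          assume "n < int k - 1 - int p"
          hence "p < nat (int k - n - 1)" by linarith
          thus ?thesis by (simp add: Et_low)
        qed (simp add: Ak)
      qed
    qed simp
    also have "\<dots> = Sum_any (\<lambda>n. scale (Bc a k e n) (A n))"
    proof (rule Sum_any.cong)
      fix n
      show "(\<Sum>p=0..en. scale (\<delta> p * Et k n $ p) (A n)) = scale (Bc a k e n) (A n)"
      proof (cases "n < int k")
        case True
        have "(\<Sum>p=0..en. \<delta> p * Et k n $ p) = Bc a k e n"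
          using S2b[OF True, where e=en and a=a] False by (simp add: Bc_def \<delta>_def mult.commute en_def)
        thus ?thesis by (simp add: scale_sum_left[symmetric])
      qed (simp add: Ak)
    qed
    finally show ?thesis by (simp add: Rb_def)
  qed
  have "Pb scale l H e = Rb scale a k A (e + int k)" for e
    using VZ[OF HS, where l=l and k=k and e="e + int k"] P[of "e + int k"] by (simp add: D_def)
  thus ?thesis using Ak by blast
qed

end

lemma root_unity_int:
  assumes T: "T > (0::nat)"
  shows "exp (2 * pi * \<i> * of_int m / of_nat T) = 1 \<longleftrightarrow> int T dvd m"
proof -
  define \<theta> where "\<theta> = 2 * pi * real_of_int m / real T"
  have e: "exp (2 * pi * \<i> * of_int m / of_nat T) = cis \<theta>"
    by (simp add: cis_conv_exp \<theta>_def mult.commute mult.left_commute)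
  show ?thesis
  proof
    assume "exp (2 * pi * \<i> * of_int m / of_nat T) = 1"
    hence "cos \<theta> = 1" using e by (metis cis.sel(1) one_complex.sel(1))
    hence "\<exists>n::int. \<theta> = real_of_int n * 2 * pi" by (simp only: cos_one_2pi_int)
    then obtain n :: int where n: "\<theta> = real_of_int n * 2 * pi" by blast
    hence "real_of_int m = real_of_int n * real T" using T by (simp add: \<theta>_def field_simps)
    hence "m = n * int T" by (metis of_int_eq_iff of_int_mult of_int_of_nat_eq)
    thus "int T dvd m" by simp
  next
    assume "int T dvd m"
    then obtain n where "m = int T * n" by blast
    hence "\<theta> = 2 * pi * real_of_int n" using T by (simp add: \<theta>_def)
    thus "exp (2 * pi * \<i> * of_int m / of_nat T) = 1" using e by simp
  qed
qed

locale LS =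
  fixes smul :: "complex \<Rightarrow> 'v::ab_group_add \<Rightarrow> 'v"
    and Y :: "'v \<Rightarrow> 'v \<Rightarrow> int \<Rightarrow> 'v" and vac :: 'v
    and g :: "'v \<Rightarrow> 'v" and T :: nat
    and smulW :: "complex \<Rightarrow> 'w::ab_group_add \<Rightarrow> 'w"
    and YW :: "'v \<Rightarrow> 'w \<Rightarrow> int \<Rightarrow> 'w"
  assumes VA: "vertex_algebra smul Y vac"
    and aut: "va_automorphism smul Y vac g"
    and Tpos: "T > 0" and order: "g ^^ T = id"
    and YWm: "twisted_field_map smul smulW vac g T YW"
begin

lemma vsW: "vector_space smulW" using YWm by (simp add: twisted_field_map_def)
lemma vsV: "vector_space smul" using VA by (simp add: vertex_algebra_def)

sublocale W: cvs smulW by (rule vsW[unfolded cvs_def[symmetric]])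
sublocale V: cvs smul by (rule vsV[unfolded cvs_def[symmetric]])

lemma linYWv: "Vector_Spaces.linear smul smulW (\<lambda>v. YW v w j)"
  using YWm by (simp add: twisted_field_map_def)
lemma linYWw: "Vector_Spaces.linear smulW smulW (\<lambda>w. YW v w j)"
  using YWm by (simp add: twisted_field_map_def)

lemma YW_add1: "YW (u1 + u2) w j = YW u1 w j + YW u2 w j"
  using linYWv[of w j] by (simp add: Vector_Spaces.linear_iff)
lemma YW_scale1: "YW (smul c u) w j = smulW c (YW u w j)"
  using linYWv[of w j] by (simp add: Vector_Spaces.linear_iff)
lemma YW_zero1 [simp]: "YW 0 w j = 0"
  using YW_scale1[of 0 0 w j] by simp
lemma YW_add2: "YW v (w1 + w2) j = YW v w1 j + YW v w2 j"
  using linYWw[of v j] by (simp add: Vector_Spaces.linear_iff)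
lemma YW_zero2 [simp]: "YW v 0 j = 0"
  using YW_add2[of v 0 0 j] by simp
lemma YW_low: "\<exists>N. \<forall>j<N. YW v w j = 0"
  using YWm by (simp add: twisted_field_map_def)
lemma YW_twist: "YW (g v) w j = smulW (exp (2 * pi * \<i> * of_int j / of_nat T)) (YW v w j)"
  using YWm by (simp add: twisted_field_map_def)

lemma linY1: "Vector_Spaces.linear smul smul (\<lambda>u. Y u v n)"
  using VA by (simp add: vertex_algebra_def)
lemma Y_add1: "Y (u1 + u2) v n = Y u1 v n + Y u2 v n"
  using linY1[of v n] by (simp add: Vector_Spaces.linear_iff)
lemma Y_scale1: "Y (smul c u) v n = smul c (Y u v n)"
  using linY1[of v n] by (simp add: Vector_Spaces.linear_iff)
lemma Y_zero1 [simp]: "Y 0 v n = 0"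
  using Y_scale1[of 0 0 v n] by simp
lemma Y_up: "\<exists>N. \<forall>n\<ge>N. Y u v n = 0"
  using VA by (simp add: vertex_algebra_def)

lemma eig_supp:
  assumes u: "u \<in> eigenspace_Vr smul g T r" and nz: "YW u w j \<noteq> 0"
  shows "int T dvd j + int r"
proof -
  have gu: "g u = smul (exp (- 2 * pi * \<i> * of_nat r / of_nat T)) u"
    using u by (simp add: eigenspace_Vr_def)
  have "smulW (exp (- 2 * pi * \<i> * of_nat r / of_nat T)) (YW u w j)
      = smulW (exp (2 * pi * \<i> * of_int j / of_nat T)) (YW u w j)"
    using YW_twist[of u w j] by (simp add: gu YW_scale1)
  hence eq: "exp (- 2 * pi * \<i> * of_nat r / of_nat T) = exp (2 * pi * \<i> * of_int j / of_nat T)"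
    using nz by simp
  have "exp (2 * pi * \<i> * of_int (j + int r) / of_nat T)
      = exp (2 * pi * \<i> * of_int j / of_nat T) / exp (- 2 * pi * \<i> * of_nat r / of_nat T)"
  proof -
    have arg: "2 * pi * \<i> * of_int (j + int r) / of_nat T
       = 2 * pi * \<i> * of_int j / of_nat T - (- 2 * pi * \<i> * of_nat r / of_nat T)"
      using Tpos by (simp add: field_simps)
    show ?thesis by (simp only: arg exp_diff)
  qed
  also have "\<dots> = 1" using eq by simp
  finally show ?thesis using root_unity_int[OF Tpos] by blast
qed

end

lemma SA_dvd_reindex:
  fixes f :: "int \<Rightarrow> 'a::comm_monoid_add"
  assumes T: "T > (0::nat)" and supp: "\<And>i. f i \<noteq> 0 \<Longrightarrow> int T dvd i + int r"
  shows "Sum_any f = Sum_any (\<lambda>s. f (int T * s - int r))"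
proof -
  let ?h = "\<lambda>s. int T * s - int r"
  have inj: "inj ?h" using T by (auto simp: inj_def)
  have "{i. f i \<noteq> 0} = ?h ` {s. f (?h s) \<noteq> 0}"
  proof (intro set_eqI iffI)
    fix i assume "i \<in> {i. f i \<noteq> 0}"
    hence nz: "f i \<noteq> 0" by simp
    then obtain s where "i + int r = int T * s" using supp[OF nz] by (auto elim: dvdE)
    hence "i = ?h s" by simp
    thus "i \<in> ?h ` {s. f (?h s) \<noteq> 0}" using nz by auto
  qed auto
  hence "sum f {i. f i \<noteq> 0} = sum f (?h ` {s. f (?h s) \<noteq> 0})" by simp
  also have "\<dots> = sum (f \<circ> ?h) {s. f (?h s) \<noteq> 0}"
    by (rule sum.reindex) (rule inj_on_subset[OF inj], simp)
  finally show ?thesis by (simp add: Sum_any.expand_set)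
qed

context LS
begin

definition Hc :: "nat \<Rightarrow> 'v \<Rightarrow> 'v \<Rightarrow> 'w \<Rightarrow> int \<Rightarrow> int \<Rightarrow> 'w" where
  "Hc r u v w c s = YW u (YW v w (c - (int T * s - int r))) (int T * s - int r)"

definition Ac :: "'v \<Rightarrow> 'v \<Rightarrow> 'w \<Rightarrow> int \<Rightarrow> int \<Rightarrow> 'w" where
  "Ac u v w c n = YW (Y u v n) w c"

lemma Hc_up: "\<exists>S. \<forall>s>S. Hc r u v w c s = 0"
proof -
  obtain N where N: "\<forall>j<N. YW v w j = 0" using YW_low by blast
  have "Hc r u v w c s = 0" if s: "s > \<bar>c + int r - N\<bar>" for s
  proof -
    have T1: "int T \<ge> 1" using Tpos by simp
    have "s > 0" using s by (meson abs_ge_zero le_less_trans)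
    hence "int T * s \<ge> 1 * s" using T1 by (intro mult_right_mono) auto
    hence "c - (int T * s - int r) < N" using s by linarith
    thus ?thesis using N by (simp add: Hc_def)
  qed
  thus ?thesis by blast
qed

lemma prodk_zero:
  assumes u: "u \<in> eigenspace_Vr smul g T r" and nd: "\<not> int T dvd i + int r"
  shows "prodk smulW T YW k u v w i j = 0"
proof -
  have "YW u (YW v w (j - int T * int m)) (i - int T * int (k - m)) = 0" for m
  proof (rule ccontr)
    assume "\<not> ?thesis"
    hence "int T dvd (i - int T * int (k - m)) + int r" by (rule eig_supp[OF u])
    hence "int T dvd (i + int r) - int T * int (k - m)" by (simp add: algebra_simps)
    moreover have "int T dvd int T * int (k - m)" by simp
    ultimately have "int T dvd (i + int r - int T * int (k - m)) + int T * int (k - m)" by (rule dvd_add)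
    hence "int T dvd i + int r" by simp
    thus False using nd by simp
  qed
  note z = this
  show ?thesis unfolding prodk_def
    by (rule sum.neutral, rule ballI, simp only: z W.scale_zero_right)
qed

lemma prodk_Dk:
  "prodk smulW T YW k u v w (int T * s - int r) j
   = Dk smulW k (Hc r u v w (int T * s - int r + j - int T * int k)) s"
  unfolding prodk_def Dk_def
proof (rule sum.cong[OF refl])
  fix m assume "m \<in> {..k}"
  hence mk: "m \<le> k" by simp
  have e1: "int T * s - int r - int T * int (k - m) = int T * (s - int k + int m) - int r"
    using mk by (simp add: of_nat_diff algebra_simps)
  have e2: "int T * s - int r + j - int T * int k - (int T * (s - int k + int m) - int r) = j - int T * int m"
    by (simp add: algebra_simps)
  show "smulW ((- 1) ^ m * of_nat (k choose m)) (YW u (YW v w (j - int T * int m)) (int T * s - int r - int T * int (k - m)))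
      = smulW ((- 1) ^ m * of_nat (k choose m)) (Hc r u v w (int T * s - int r + j - int T * int k) (s - int k + int m))"
    by (simp only: Hc_def e1 e2)
qed

lemma assoc_LA: "assoc_lhs smulW Y T YW k u v w p m = LA smulW k (Ac u v w (m - int T * int k)) p"
  by (simp add: assoc_lhs_def LA_def Ac_def EE_def)

lemma subst_RA:
  assumes u: "u \<in> eigenspace_Vr smul g T r"
  shows "subst_x1 smulW T (prodk smulW T YW k u v w) p m
       = RA smulW (of_nat r / of_nat T) (Dk smulW k (Hc r u v w (m - int T * int k))) p"
proof (cases "p < 0")
  case True thus ?thesis by (simp add: subst_x1_def RA_def)
next
  case False
  let ?f = "\<lambda>i. smulW ((of_int i / of_nat T) ^ nat p / of_nat (fact (nat p))) (prodk smulW T YW k u v w i (m - i))"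
  have "Sum_any ?f = Sum_any (\<lambda>s. ?f (int T * s - int r))"
  proof (rule SA_dvd_reindex[OF Tpos])
    fix i assume "?f i \<noteq> 0"
    thus "int T dvd i + int r" using prodk_zero[OF u] by fastforce
  qed
  also have "\<dots> = Sum_any (\<lambda>s. smulW ((of_int s - of_nat r / of_nat T) ^ nat p / of_nat (fact (nat p)))
                       (Dk smulW k (Hc r u v w (m - int T * int k)) s))"
  proof (rule Sum_any.cong)
    fix s
    have "of_int (int T * s - int r) / (of_nat T :: complex) = of_int s - of_nat r / of_nat T"
      using Tpos by (simp add: field_simps)
    moreover have "int T * s - int r + (m - (int T * s - int r)) - int T * int k = m - int T * int k" by simp
    ultimately show "?f (int T * s - int r) = smulW ((of_int s - of_nat r / of_nat T) ^ nat p / of_nat (fact (nat p)))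
                       (Dk smulW k (Hc r u v w (m - int T * int k)) s)"
      by (simp only: prodk_Dk)
  qed
  finally show ?thesis using False by (simp add: subst_x1_def RA_def)
qed

end

context LS
begin

lemma phi_lhs_Pb:
  assumes u: "u \<in> eigenspace_Vr smul g T r"
  shows "phi_lhs smulW T YW l r u v w e c
       = (if int T dvd e then Pb smulW l (Hc r u v w c) (e div int T) else 0)"
proof -
  define jj where "jj K = e - int l * int T - int r + int K * int T" for K :: nat
  define coef where "coef K = (\<Sum>k\<le>K. ((of_nat l + of_nat r / of_nat T :: complex) gchoose k)
                        * ((of_int (jj K) / of_nat T) gchoose (K - k)))" for K
  have phi: "phi_lhs smulW T YW l r u v w e c = Sum_any (\<lambda>K. smulW (coef K) (YW u (YW v w (c - jj K)) (jj K)))"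
    by (simp add: phi_lhs_def Let_def jj_def coef_def)
  show ?thesis
  proof (cases "int T dvd e")
    case False
    have "YW u (YW v w (c - jj K)) (jj K) = 0" for K
    proof (rule ccontr)
      assume "\<not> ?thesis"
      hence "int T dvd jj K + int r" by (rule eig_supp[OF u])
      hence "int T dvd e + int T * (int K - int l)" by (simp add: jj_def algebra_simps)
      hence "int T dvd e" by (simp add: dvd_add_left_iff)
      thus False using False by simp
    qed
    hence "(\<lambda>K. smulW (coef K) (YW u (YW v w (c - jj K)) (jj K))) = (\<lambda>K. 0)" by simp
    thus ?thesis using False by (simp only: phi Sum_any.neutral) simp
  next
    case True
    then obtain e' where e': "e = int T * e'" by blast
    have ediv: "e div int T = e'" using Tpos e' by simp
    have trm: "smulW (coef K) (YW u (YW v w (c - jj K)) (jj K))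
       = smulW (of_int (int l + (e' - int l + int K)) gchoose K) (Hc r u v w c (e' - int l + int K))" for K
    proof -
      have j: "jj K = int T * (e' - int l + int K) - int r" by (simp add: jj_def e' algebra_simps)
      have "coef K = (\<Sum>k=0..K. ((of_nat l + of_nat r / of_nat T :: complex) gchoose k)
                        * ((of_int (jj K) / of_nat T) gchoose (K - k)))"
        by (simp add: coef_def atMost_atLeast0)
      also have "\<dots> = ((of_nat l + of_nat r / of_nat T) + of_int (jj K) / of_nat T) gchoose K"
        by (rule gbinomial_Vandermonde)
      also have "(of_nat l + of_nat r / of_nat T) + of_int (jj K) / (of_nat T :: complex)
               = of_int (int l + (e' - int l + int K))"
        using Tpos by (simp add: j field_simps)
      finally show ?thesis by (simp add: Hc_def j)
    qed
    obtain S where S: "\<forall>s>S. Hc r u v w c s = 0" using Hc_up by blast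
    have "Sum_any (\<lambda>K. smulW (coef K) (YW u (YW v w (c - jj K)) (jj K)))
        = Sum_any (\<lambda>K. smulW (of_int (int l + (e' - int l + int K)) gchoose K) (Hc r u v w c (e' - int l + int K)))"
      by (simp only: trm)
    also have "\<dots> = Sum_any (\<lambda>s. if s \<ge> e' - int l then
          smulW (of_int (int l + (e' - int l + int (nat (s - (e' - int l))))) gchoose (nat (s - (e' - int l))))
             (Hc r u v w c (e' - int l + int (nat (s - (e' - int l))))) else 0)"
      by (rule SA_nat_int[of "nat (S - e' + int l + 1)"]) (simp add: S)
    also have "\<dots> = Pb smulW l (Hc r u v w c) e'"
      unfolding Pb_def
    proof (rule Sum_any.cong)
      fix s
      show "(if s \<ge> e' - int l then
          smulW (of_int (int l + (e' - int l + int (nat (s - (e' - int l))))) gchoose (nat (s - (e' - int l))))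
             (Hc r u v w c (e' - int l + int (nat (s - (e' - int l))))) else 0)
          = smulW (Cinf (int l + s) e') (Hc r u v w c s)"
      proof (cases "s \<ge> e' - int l")
        case True
        have a: "e' - int l + int (nat (s - (e' - int l))) = s" using True by simp
        have b: "nat (s - (e' - int l)) = nat (int l + s - e')" by (simp add: algebra_simps)
        show ?thesis using True by (simp only: a b if_True) (simp add: Cinf_def)
      qed (simp add: Cinf_def)
    qed
    finally show ?thesis using True by (simp add: phi ediv)
  qed
qed

lemma ell_sum:
  assumes nk: "n < int k"
  shows "Sum_any (\<lambda>i::nat. (a gchoose i) * fls_nth (fps_to_fls LL powi (- n - 1)) (e' - int i))
       = Bc a k (e' + int k) n"
proof -
  define N where "N = nat (e' + int k)"
  define j where "j = nat (int k - n - 1)"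
  have ell: "fls_nth (fps_to_fls LL powi (- n - 1)) t = (if t < - n - 1 then 0 else Lam (- n - 1) $ nat (t + n + 1))" for t
  proof -
    have eq: "nat (t - (- n - 1)) = nat (t + n + 1)" by (rule arg_cong[where f=nat]) simp
    show ?thesis by (simp only: fls_LL_nth eq)
  qed
  have out: "i > N \<Longrightarrow> fls_nth (fps_to_fls LL powi (- n - 1)) (e' - int i) = 0" for i
    using nk by (simp add: ell N_def)
  have "Sum_any (\<lambda>i::nat. (a gchoose i) * fls_nth (fps_to_fls LL powi (- n - 1)) (e' - int i))
      = (\<Sum>i=0..N. (a gchoose i) * fls_nth (fps_to_fls LL powi (- n - 1)) (e' - int i))"
    by (rule SA_eq_sum) (auto simp: out)
  also have "\<dots> = Bc a k (e' + int k) n"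
  proof (cases "e' + int k < 0")
    case True
    have "fls_nth (fps_to_fls LL powi (- n - 1)) (e' - int i) = 0" for i
      using True nk by (simp add: ell)
    thus ?thesis using True by (simp add: Bc_def)
  next
    case False
    have Bt: "Bt a k n = fps_binomial a * (fps_X ^ j * Lam (- n - 1))" by (simp add: Bt_def j_def mult.assoc)
    have "Bc a k (e' + int k) n = (\<Sum>i=0..N. (a gchoose i) * (fps_X ^ j * Lam (- n - 1)) $ (N - i))"
      using False by (simp add: Bc_def Bt fps_mult_nth N_def)
    also have "\<dots> = (\<Sum>i=0..N. (a gchoose i) * fls_nth (fps_to_fls LL powi (- n - 1)) (e' - int i))"
    proof (rule sum.cong[OF refl])
      fix i assume "i \<in> {0..N}"
      hence iN: "i \<le> N" by simp
      have c1: "(N - i < j) \<longleftrightarrow> (e' - int i < - n - 1)" using iN False nk by (simp add: N_def j_def) linarith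
      have c2: "\<not> N - i < j \<Longrightarrow> N - (i + j) = nat (e' - int i + n + 1)" using iN False nk by (simp add: N_def j_def)
      show "(a gchoose i) * (fps_X ^ j * Lam (- n - 1)) $ (N - i) = (a gchoose i) * fls_nth (fps_to_fls LL powi (- n - 1)) (e' - int i)"
        by (cases "N - i < j") (simp_all add: fps_X_power_mult_nth ell c1 c2)
    qed
    finally show ?thesis by simp
  qed
  finally show ?thesis .
qed

lemma phi_rhs_Rb:
  assumes Ak: "\<And>n. n \<ge> int k \<Longrightarrow> Ac u v w c n = 0"
  shows "phi_rhs smulW Y T YW l r u v w e c
       = (if int T dvd e then Rb smulW (of_nat l + of_nat r / of_nat T) k (Ac u v w c) (e div int T + int k) else 0)"
proof (cases "int T dvd e")
  case False thus ?thesis by (simp add: phi_rhs_def)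
next
  case True
  define a where "a = (of_nat l + of_nat r / of_nat T :: complex)"
  define e' where "e' = e div int T"
  define A where "A = Ac u v w c"
  have AK: "n \<ge> int k \<Longrightarrow> A n = 0" for n by (simp add: A_def Ak)
  define G where "G i n = smulW ((a gchoose i) * fls_nth (fps_to_fls LL powi (- n - 1)) (e' - int i)) (A n)" for i :: nat and n :: int
  have ell: "fls_nth (fps_to_fls LL powi (- n - 1)) t = (if t < - n - 1 then 0 else Lam (- n - 1) $ nat (t + n + 1))" for t n
  proof -
    have eq: "nat (t - (- n - 1)) = nat (t + n + 1)" by (rule arg_cong[where f=nat]) simp
    show ?thesis by (simp only: fls_LL_nth eq)
  qed
  have Gz: "G i n = 0" if "\<not> (i \<le> nat (e' + int k) \<and> n \<in> {- e' - 1..int k})" for i n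
  proof (cases "n < int k")
    case True
    hence "e' - int i < - n - 1" using that by auto
    thus ?thesis by (simp add: G_def ell)
  qed (simp add: G_def AK)
  have box: "{i. \<exists>n. G i n \<noteq> 0} \<times> {n. \<exists>i. G i n \<noteq> 0} \<subseteq> {..nat (e' + int k)} \<times> {- e' - 1..int k}"
    using Gz by blast
  have "phi_rhs smulW Y T YW l r u v w e c = Sum_any (\<lambda>(i, n). G i n)"
    using True by (simp add: phi_rhs_def G_def a_def e'_def A_def Ac_def LL_def)
  also have "\<dots> = Sum_any (\<lambda>i. Sum_any (G i))"
    by (rule Sum_any.cartesian_product[symmetric, OF _ box]) simp
  also have "\<dots> = Sum_any (\<lambda>n. Sum_any (\<lambda>i. G i n))"
    by (rule Sum_any.swap[OF _ box]) simp
  also have "\<dots> = Sum_any (\<lambda>n. smulW (Bc a k (e' + int k) n) (A n))"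
  proof (rule Sum_any.cong)
    fix n
    show "Sum_any (\<lambda>i. G i n) = smulW (Bc a k (e' + int k) n) (A n)"
    proof (cases "n < int k")
      case True
      have fin: "finite {i. (a gchoose i) * fls_nth (fps_to_fls LL powi (- n - 1)) (e' - int i) \<noteq> 0}"
        by (rule fin_nat_supp[of "nat (e' + int k)"]) (use True in \<open>auto simp: ell\<close>)
      show ?thesis
        unfolding G_def using W.SA_scale_left[OF fin, of "A n"] ell_sum[OF True, of a e'] by simp
    qed (simp add: G_def AK)
  qed
  finally show ?thesis using True by (simp add: Rb_def a_def e'_def A_def)
qed

end

context LS
begin

lemma prodk_low:
  assumes N: "\<forall>j<N. YW v w j = 0" and j: "j < N"
  shows "prodk smulW T YW k u v w i j = 0"
proof -
  have "YW v w (j - int T * int m) = 0" for m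
  proof -
    have "int T * int m \<ge> 0" by simp
    hence "j - int T * int m < N" using j by linarith
    thus ?thesis using N by simp
  qed
  thus ?thesis unfolding prodk_def by (simp add: W.scale_zero_right)
qed

lemma a_to_b:
  assumes u: "u \<in> eigenspace_Vr smul g T r"
    and inW: "\<And>w. in_W_two_var (prodk smulW T YW k u v w)"
    and idt: "\<And>w. assoc_lhs smulW Y T YW k u v w = subst_x1 smulW T (prodk smulW T YW k u v w)"
  shows "\<exists>l. phi_lhs smulW T YW l r u v w = phi_rhs smulW Y T YW l r u v w"
proof -
  obtain N where N: "\<And>i j. i < N \<or> j < N \<Longrightarrow> prodk smulW T YW k u v w i j = 0"
    using inW[of w] unfolding in_W_two_var_def by blast
  obtain N0 where N0: "\<forall>n\<ge>N0. Y u v n = 0" using Y_up by blast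
  define s0 where "s0 = - \<bar>N\<bar>"
  define l where "l = nat \<bar>N\<bar>"
  have T1: "int T \<ge> 1" using Tpos by simp
  have ls: "int l + s0 \<ge> 0" by (simp add: l_def s0_def)
  have main: "phi_lhs smulW T YW l r u v w e c = phi_rhs smulW Y T YW l r u v w e c" for e c
  proof -
    obtain S where S: "\<forall>s>S. Hc r u v w c s = 0" using Hc_up by blast
    have D0: "Dk smulW k (Hc r u v w c) s = 0" if s: "s < s0" for s
    proof -
      have "int T * s \<le> 1 * s" using T1 s by (intro mult_right_mono_neg) (auto simp: s0_def)
      hence lt: "int T * s - int r < N" using s by (simp add: s0_def)
      have "prodk smulW T YW k u v w (int T * s - int r) (c + int T * int k - (int T * s - int r)) = 0"
        using N lt by blast
      thus ?thesis by (simp add: prodk_Dk)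
    qed
    have AN: "n \<ge> N0 \<Longrightarrow> Ac u v w c n = 0" for n using N0 by (simp add: Ac_def)
    have AB: "LA smulW k (Ac u v w c) p = RA smulW (of_nat r / of_nat T) (Dk smulW k (Hc r u v w c)) p" for p
      using fun_cong[OF fun_cong[OF idt[of w], of p], of "c + int T * int k"]
      by (simp add: assoc_LA subst_RA[OF u])
    have C: "(\<forall>n. n \<ge> int k \<longrightarrow> Ac u v w c n = 0) \<and>
             (\<forall>e. Pb smulW l (Hc r u v w c) e = Rb smulW (of_nat l + of_nat r / of_nat T) k (Ac u v w c) (e + int k))"
      by (rule W.core1[OF _ AN D0 ls AB refl]) (use S in auto)
    have Ak': "\<And>n. n \<ge> int k \<Longrightarrow> Ac u v w c n = 0" using C by blast
    show ?thesis
      using C by (simp add: phi_lhs_Pb[OF u] phi_rhs_Rb[OF Ak'])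
  qed
  show ?thesis by (rule exI[of _ l]) (simp add: fun_eq_iff main)
qed

lemma b_to_a_eig:
  assumes u: "u \<in> eigenspace_Vr smul g T r"
    and Ak: "\<And>n. n \<ge> int k \<Longrightarrow> Y u v n = 0"
    and B: "\<exists>l. phi_lhs smulW T YW l r u v w = phi_rhs smulW Y T YW l r u v w"
  shows "in_W_two_var (prodk smulW T YW k u v w) \<and>
         assoc_lhs smulW Y T YW k u v w = subst_x1 smulW T (prodk smulW T YW k u v w)"
proof -
  obtain l where l: "phi_lhs smulW T YW l r u v w = phi_rhs smulW Y T YW l r u v w" using B by blast
  have AK: "n \<ge> int k \<Longrightarrow> Ac u v w c n = 0" for n c by (simp add: Ac_def Ak)
  have C: "(\<forall>s. int l + s < 0 \<longrightarrow> Dk smulW k (Hc r u v w c) s = 0) \<and>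
           (\<forall>p. LA smulW k (Ac u v w c) p = RA smulW (of_nat r / of_nat T) (Dk smulW k (Hc r u v w c)) p)" for c
  proof -
    obtain S where S: "\<forall>s>S. Hc r u v w c s = 0" using Hc_up by blast
    have Bc: "Pb smulW l (Hc r u v w c) e = Rb smulW (of_nat l + of_nat r / of_nat T) k (Ac u v w c) (e + int k)" for e
    proof -
      have "phi_lhs smulW T YW l r u v w (int T * e) c = phi_rhs smulW Y T YW l r u v w (int T * e) c"
        using l by simp
      thus ?thesis using Tpos by (simp add: phi_lhs_Pb[OF u] phi_rhs_Rb[OF AK])
    qed
    show ?thesis by (rule W.core2[OF _ AK Bc refl]) (use S in auto)
  qed
  obtain Nv where Nv: "\<forall>j<Nv. YW v w j = 0" using YW_low by blast
  have inW: "in_W_two_var (prodk smulW T YW k u v w)"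
    unfolding in_W_two_var_def
  proof (intro exI[of _ "min Nv (- int l * int T - int r)"] allI impI)
    fix i j assume ij: "i < min Nv (- int l * int T - int r) \<or> j < min Nv (- int l * int T - int r)"
    show "prodk smulW T YW k u v w i j = 0"
    proof (cases "int T dvd i + int r")
      case False thus ?thesis by (rule prodk_zero[OF u])
    next
      case True
      then obtain s where s: "i + int r = int T * s" by blast
      show ?thesis
      proof (cases "j < Nv")
        case True thus ?thesis by (rule prodk_low[OF Nv])
      next
        case False
        hence "i < - int l * int T - int r" using ij by linarith
        hence "int T * s < int T * (- int l)" using s by (simp add: algebra_simps)
        moreover have pos: "int T > 0" using Tpos by simp
        ultimately have "s < - int l" using mult_less_cancel_left_pos[OF pos, of s "- int l"] by blast
        hence "Dk smulW k (Hc r u v w (int T * s - int r + j - int T * int k)) s = 0" using C by simp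
        moreover have "i = int T * s - int r" using s by simp
        ultimately show ?thesis by (simp add: prodk_Dk)
      qed
    qed
  qed
  have "assoc_lhs smulW Y T YW k u v w p m = subst_x1 smulW T (prodk smulW T YW k u v w) p m" for p m
    using C by (simp add: assoc_LA subst_RA[OF u])
  thus ?thesis using inW by (simp add: fun_eq_iff)
qed

end

lemma root_sum:
  assumes T: "T > (0::nat)" and t: "t < T"
  shows "(\<Sum>r<T. exp (2 * pi * \<i> * of_nat r * of_nat t / of_nat T)) = (if t = 0 then of_nat T else 0)"
proof (cases "t = 0")
  case True thus ?thesis by simp
next
  case False
  define z where "z = exp (2 * pi * \<i> * of_int (int t) / of_nat T)"
  have zr: "exp (2 * pi * \<i> * of_nat r * of_nat t / of_nat T) = z ^ r" for r
  proof -
    have "2 * pi * \<i> * of_nat r * of_nat t / of_nat T = of_nat r * (2 * pi * \<i> * of_int (int t) / of_nat T)"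
      by simp
    thus ?thesis by (simp only: z_def exp_of_nat_mult)
  qed
  have z1: "z \<noteq> 1"
  proof
    assume "z = 1"
    hence "int T dvd int t" using root_unity_int[OF T, of "int t"] unfolding z_def by blast
    hence "T dvd t" by (simp only: of_nat_dvd_iff)
    thus False using False t by (simp add: nat_dvd_not_less)
  qed
  have zT: "z ^ T = 1"
  proof -
    have "z ^ T = exp (2 * pi * \<i> * of_nat T * of_nat t / of_nat T)" by (simp only: zr)
    also have "\<dots> = exp (2 * pi * \<i> * of_int (int (T * t)) / of_nat T)" by simp
    also have "\<dots> = 1" by (subst root_unity_int[OF T]) simp
    finally show ?thesis .
  qed
  have "(\<Sum>r<T. exp (2 * pi * \<i> * of_nat r * of_nat t / of_nat T)) = (\<Sum>r<T. z ^ r)"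
    by (simp only: zr)
  also have "\<dots> = 0" using z1 zT by (simp add: sum_gp_strict)
  finally show ?thesis using False by simp
qed

lemma sum_cyclic: "f T = f 0 \<Longrightarrow> (\<Sum>t<T. f (Suc t)) = (\<Sum>t<T. (f t :: 'a::cancel_comm_monoid_add))"
proof -
  assume e: "f T = f 0"
  have "f 0 + (\<Sum>t<T. f (Suc t)) = (\<Sum>t<Suc T. f t)" by (rule sum.lessThan_Suc_shift[symmetric])
  also have "\<dots> = (\<Sum>t<T. f t) + f T" by (rule sum.lessThan_Suc)
  also have "\<dots> = (\<Sum>t<T. f t) + f 0" using e by simp
  finally show ?thesis by (simp add: add.commute)
qed

context LS
begin

lemma g_lin: "Vector_Spaces.linear smul smul g" using aut by (simp add: va_automorphism_def)
lemma g_add: "g (x + y) = g x + g y" using g_lin by (simp add: Vector_Spaces.linear_iff)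
lemma g_scale: "g (smul c x) = smul c (g x)" using g_lin by (simp add: Vector_Spaces.linear_iff)
lemma g_zero: "g 0 = 0" using g_scale[of 0 0] by simp
lemma g_sum: "g (sum f A) = (\<Sum>a\<in>A. g (f a))"
  by (induction A rule: infinite_finite_induct) (simp_all add: g_zero g_add)

definition proj :: "nat \<Rightarrow> 'v \<Rightarrow> 'v" where
  "proj r u = smul (1 / of_nat T) (\<Sum>t<T. smul (exp (2 * pi * \<i> * of_nat r * of_nat t / of_nat T)) ((g ^^ t) u))"

lemma proj_eig: "proj r u \<in> eigenspace_Vr smul g T r"
proof -
  define \<alpha> where "\<alpha> = exp (- 2 * pi * \<i> * of_nat r / of_nat T)"
  define \<omega> where "\<omega> t = exp (2 * pi * \<i> * of_nat r * of_nat t / of_nat T)" for t :: nat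
  define f where "f t = smul (\<alpha> * \<omega> t) ((g ^^ t) u)" for t
  have fS: "f (Suc t) = smul (\<omega> t) ((g ^^ Suc t) u)" for t
  proof -
    have ar: "- 2 * pi * \<i> * of_nat r / of_nat T + 2 * pi * \<i> * of_nat r * of_nat (Suc t) / of_nat T
        = (2 * pi * \<i> * of_nat r * of_nat t / of_nat T :: complex)"
      using Tpos by (simp add: field_simps)
    have "\<alpha> * \<omega> (Suc t) = \<omega> t"
      unfolding \<alpha>_def \<omega>_def by (simp only: exp_add[symmetric] ar)
    thus ?thesis by (simp add: f_def)
  qed
  have fT: "f T = f 0"
  proof -
    have "\<omega> T = exp (2 * pi * \<i> * of_int (int (r * T)) / of_nat T)" by (simp add: \<omega>_def)
    also have "\<dots> = 1" by (subst root_unity_int[OF Tpos]) simp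
    finally show ?thesis by (simp add: f_def order \<omega>_def)
  qed
  have "g (proj r u) = smul (1 / of_nat T) (\<Sum>t<T. smul (\<omega> t) ((g ^^ Suc t) u))"
    by (simp add: proj_def g_scale g_sum \<omega>_def)
  also have "(\<Sum>t<T. smul (\<omega> t) ((g ^^ Suc t) u)) = (\<Sum>t<T. f t)"
    using sum_cyclic[of f T, OF fT] by (simp add: fS)
  also have "smul (1 / of_nat T) (\<Sum>t<T. f t) = smul \<alpha> (proj r u)"
    by (simp add: proj_def f_def \<omega>_def V.scale_sum_right V.scale_scale mult.commute mult.left_commute)
  finally show ?thesis by (simp add: eigenspace_Vr_def \<alpha>_def)
qed

lemma proj_sum: "(\<Sum>r<T. proj r u) = u"
proof -
  have "(\<Sum>r<T. proj r u) = smul (1 / of_nat T) (\<Sum>r<T. \<Sum>t<T. smul (exp (2 * pi * \<i> * of_nat r * of_nat t / of_nat T)) ((g ^^ t) u))"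
    by (simp add: proj_def V.scale_sum_right)
  also have "(\<Sum>r<T. \<Sum>t<T. smul (exp (2 * pi * \<i> * of_nat r * of_nat t / of_nat T)) ((g ^^ t) u))
      = (\<Sum>t<T. smul (\<Sum>r<T. exp (2 * pi * \<i> * of_nat r * of_nat t / of_nat T)) ((g ^^ t) u))"
    by (subst sum.swap) (simp add: V.scale_sum_left)
  also have "\<dots> = (\<Sum>t<T. smul (if t = 0 then of_nat T else 0) ((g ^^ t) u))"
    by (rule sum.cong[OF refl]) (subst root_sum[OF Tpos], auto)
  also have "\<dots> = smul (of_nat T) u"
  proof -
    have "(\<Sum>t<T. smul (if t = 0 then of_nat T else 0) ((g ^^ t) u)) = (\<Sum>t\<in>{0}. smul (of_nat T) ((g ^^ t) u))"
      by (rule sum.mono_neutral_cong_right) (use Tpos in auto)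
    thus ?thesis by simp
  qed
  finally show ?thesis using Tpos by (simp add: V.scale_scale)
qed

definition Qk :: "nat \<Rightarrow> 'v \<Rightarrow> 'v \<Rightarrow> bool" where
  "Qk k v u \<longleftrightarrow> (\<forall>n. n \<ge> int k \<longrightarrow> Y u v n = 0) \<and>
     (\<forall>w. in_W_two_var (prodk smulW T YW k u v w) \<and>
          assoc_lhs smulW Y T YW k u v w = subst_x1 smulW T (prodk smulW T YW k u v w))"

lemma prodk_add: "prodk smulW T YW k (u1 + u2) v w i j = prodk smulW T YW k u1 v w i j + prodk smulW T YW k u2 v w i j"
  by (simp add: prodk_def YW_add1 W.scale_right_distrib sum.distrib)

lemma prodk_0: "prodk smulW T YW k 0 v w i j = 0"
  by (simp add: prodk_def)

lemma inW_add: "in_W_two_var F1 \<Longrightarrow> in_W_two_var F2 \<Longrightarrow> in_W_two_var (\<lambda>i j. F1 i j + (F2 i j :: 'w))"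
proof -
  assume "in_W_two_var F1" "in_W_two_var F2"
  then obtain N1 N2 where N1: "\<forall>i j. i < N1 \<or> j < N1 \<longrightarrow> F1 i j = 0" and N2: "\<forall>i j. i < N2 \<or> j < N2 \<longrightarrow> F2 i j = 0"
    by (auto simp: in_W_two_var_def)
  show ?thesis unfolding in_W_two_var_def
    by (rule exI[of _ "min N1 N2"]) (use N1 N2 in auto)
qed

lemma subst_add:
  assumes "in_W_two_var F1" "in_W_two_var F2"
  shows "subst_x1 smulW T (\<lambda>i j. F1 i j + F2 i j) p m = subst_x1 smulW T F1 p m + subst_x1 smulW T F2 p m"
proof (cases "p < 0")
  case True thus ?thesis by (simp add: subst_x1_def)
next
  case False
  obtain N1 N2 where N1: "\<forall>i j. i < N1 \<or> j < N1 \<longrightarrow> F1 i j = 0" and N2: "\<forall>i j. i < N2 \<or> j < N2 \<longrightarrow> F2 i j = 0"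
    using assms by (auto simp: in_W_two_var_def)
  define c where "c i = ((of_int i / of_nat T) ^ nat p / of_nat (fact (nat p)) :: complex)" for i
  have f1: "finite {i. smulW (c i) (F1 i (m - i)) \<noteq> 0}"
    by (rule fin_int_supp[of N1 "m - N1"]) (use N1 in auto)
  have f2: "finite {i. smulW (c i) (F2 i (m - i)) \<noteq> 0}"
    by (rule fin_int_supp[of N2 "m - N2"]) (use N2 in auto)
  have "Sum_any (\<lambda>i. smulW (c i) (F1 i (m - i) + F2 i (m - i)))
      = Sum_any (\<lambda>i. smulW (c i) (F1 i (m - i)) + smulW (c i) (F2 i (m - i)))"
    by (simp add: W.scale_right_distrib)
  also have "\<dots> = Sum_any (\<lambda>i. smulW (c i) (F1 i (m - i))) + Sum_any (\<lambda>i. smulW (c i) (F2 i (m - i)))"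
    by (rule Sum_any.distrib[OF f1 f2])
  finally show ?thesis using False by (simp add: subst_x1_def c_def)
qed

lemma assoc_add:
  assumes Y1: "\<And>n. n \<ge> int k \<Longrightarrow> Y u1 v n = 0" and Y2: "\<And>n. n \<ge> int k \<Longrightarrow> Y u2 v n = 0"
  shows "assoc_lhs smulW Y T YW k (u1 + u2) v w p m = assoc_lhs smulW Y T YW k u1 v w p m + assoc_lhs smulW Y T YW k u2 v w p m"
proof -
  define c where "c q = fps_nth ((fps_exp (1::complex) - 1) ^ k) q" for q
  define x where "x = m - int T * int k"
  have f1: "finite {q. smulW (c q) (YW (Y u1 v (int q - p - 1)) w x) \<noteq> 0}"
    by (rule fin_nat_supp[of "nat (int k + p + 1)"]) (simp add: Y1)
  have f2: "finite {q. smulW (c q) (YW (Y u2 v (int q - p - 1)) w x) \<noteq> 0}"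
    by (rule fin_nat_supp[of "nat (int k + p + 1)"]) (simp add: Y2)
  have "assoc_lhs smulW Y T YW k (u1 + u2) v w p m
      = Sum_any (\<lambda>q. smulW (c q) (YW (Y u1 v (int q - p - 1)) w x) + smulW (c q) (YW (Y u2 v (int q - p - 1)) w x))"
    by (simp add: assoc_lhs_def c_def x_def Y_add1 YW_add1 W.scale_right_distrib)
  also have "\<dots> = Sum_any (\<lambda>q. smulW (c q) (YW (Y u1 v (int q - p - 1)) w x)) + Sum_any (\<lambda>q. smulW (c q) (YW (Y u2 v (int q - p - 1)) w x))"
    by (rule Sum_any.distrib[OF f1 f2])
  also have "\<dots> = assoc_lhs smulW Y T YW k u1 v w p m + assoc_lhs smulW Y T YW k u2 v w p m"
    by (simp add: assoc_lhs_def c_def x_def)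
  finally show ?thesis .
qed

lemma Qk_0: "Qk k v 0"
proof -
  have p0: "prodk smulW T YW k 0 v w = (\<lambda>i j. 0)" for w by (simp add: fun_eq_iff prodk_0)
  show ?thesis
    by (simp add: Qk_def p0 in_W_two_var_def assoc_lhs_def subst_x1_def fun_eq_iff)
qed

lemma Qk_add: "Qk k v u1 \<Longrightarrow> Qk k v u2 \<Longrightarrow> Qk k v (u1 + u2)"
proof -
  assume Q1: "Qk k v u1" and Q2: "Qk k v u2"
  have Y1: "\<And>n. n \<ge> int k \<Longrightarrow> Y u1 v n = 0" and Y2: "\<And>n. n \<ge> int k \<Longrightarrow> Y u2 v n = 0"
    using Q1 Q2 by (auto simp: Qk_def)
  have pa: "prodk smulW T YW k (u1 + u2) v w = (\<lambda>i j. prodk smulW T YW k u1 v w i j + prodk smulW T YW k u2 v w i j)" for w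
    by (simp add: fun_eq_iff prodk_add)
  show ?thesis unfolding Qk_def
  proof (intro conjI allI impI)
    fix n assume "n \<ge> int k" thus "Y (u1 + u2) v n = 0" by (simp add: Y_add1 Y1 Y2)
  next
    fix w
    have i1: "in_W_two_var (prodk smulW T YW k u1 v w)" and i2: "in_W_two_var (prodk smulW T YW k u2 v w)"
      using Q1 Q2 by (auto simp: Qk_def)
    show "in_W_two_var (prodk smulW T YW k (u1 + u2) v w)" unfolding pa by (rule inW_add[OF i1 i2])
    have e1: "assoc_lhs smulW Y T YW k u1 v w = subst_x1 smulW T (prodk smulW T YW k u1 v w)"
      and e2: "assoc_lhs smulW Y T YW k u2 v w = subst_x1 smulW T (prodk smulW T YW k u2 v w)"
      using Q1 Q2 by (auto simp: Qk_def)
    show "assoc_lhs smulW Y T YW k (u1 + u2) v w = subst_x1 smulW T (prodk smulW T YW k (u1 + u2) v w)"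
      unfolding pa fun_eq_iff
      by (simp add: assoc_add[OF Y1 Y2] subst_add[OF i1 i2] e1 e2)
  qed
qed

lemma Qk_sum: "(\<And>r. r \<in> R \<Longrightarrow> Qk k v (f r)) \<Longrightarrow> Qk k v (sum f R)"
  by (induction R rule: infinite_finite_induct) (simp_all add: Qk_0 Qk_add)

end

theorem lemma2p6:
  fixes smul :: "complex \<Rightarrow> 'v::ab_group_add \<Rightarrow> 'v"
    and Y :: "'v \<Rightarrow> 'v \<Rightarrow> int \<Rightarrow> 'v" and vac :: 'v
    and g :: "'v \<Rightarrow> 'v" and T :: nat
    and smulW :: "complex \<Rightarrow> 'w::ab_group_add \<Rightarrow> 'w"
    and YW :: "'v \<Rightarrow> 'w \<Rightarrow> int \<Rightarrow> 'w"
  assumes VA: "vertex_algebra smul Y vac"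
    and aut: "va_automorphism smul Y vac g"
    and T_pos: "T > 0" and order: "g ^^ T = id"
    and YW: "twisted_field_map smul smulW vac g T YW"
  shows "(\<forall>u v. \<exists>k::nat.
            (\<forall>w. in_W_two_var (prodk smulW T YW k u v w)) \<and>
            (\<forall>w. assoc_lhs smulW Y T YW k u v w = subst_x1 smulW T (prodk smulW T YW k u v w)))
     \<longleftrightarrow>
         (\<forall>r u v w. r < T \<longrightarrow> u \<in> eigenspace_Vr smul g T r \<longrightarrow>
            (\<exists>l::nat. phi_lhs smulW T YW l r u v w = phi_rhs smulW Y T YW l r u v w))"
proof -
  interpret L: LS smul Y vac g T smulW YW
    using VA aut T_pos order YW by (simp add: LS_def)
  show ?thesis
  proof
    assume A: "\<forall>u v. \<exists>k::nat.
            (\<forall>w. in_W_two_var (prodk smulW T YW k u v w)) \<and>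
            (\<forall>w. assoc_lhs smulW Y T YW k u v w = subst_x1 smulW T (prodk smulW T YW k u v w))"
    show "\<forall>r u v w. r < T \<longrightarrow> u \<in> eigenspace_Vr smul g T r \<longrightarrow>
            (\<exists>l::nat. phi_lhs smulW T YW l r u v w = phi_rhs smulW Y T YW l r u v w)"
    proof (intro allI impI)
      fix r u v w assume r: "r < T" and u: "u \<in> eigenspace_Vr smul g T r"
      from A obtain k where k1: "\<And>w. in_W_two_var (prodk smulW T YW k u v w)"
        and k2: "\<And>w. assoc_lhs smulW Y T YW k u v w = subst_x1 smulW T (prodk smulW T YW k u v w)"
        by blast
      show "\<exists>l. phi_lhs smulW T YW l r u v w = phi_rhs smulW Y T YW l r u v w"
        by (rule L.a_to_b[OF u k1 k2])
    qed
  next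
    assume B: "\<forall>r u v w. r < T \<longrightarrow> u \<in> eigenspace_Vr smul g T r \<longrightarrow>
            (\<exists>l::nat. phi_lhs smulW T YW l r u v w = phi_rhs smulW Y T YW l r u v w)"
    show "\<forall>u v. \<exists>k::nat.
            (\<forall>w. in_W_two_var (prodk smulW T YW k u v w)) \<and>
            (\<forall>w. assoc_lhs smulW Y T YW k u v w = subst_x1 smulW T (prodk smulW T YW k u v w))"
    proof (intro allI)
      fix u v
      have "\<forall>r. \<exists>N. \<forall>n\<ge>N. Y (L.proj r u) v n = 0" using L.Y_up by blast
      then obtain Nf where Nf: "\<And>r n. n \<ge> Nf r \<Longrightarrow> Y (L.proj r u) v n = 0" by metis
      define k where "k = (\<Sum>r<T. nat (Nf r))"
      have Q: "L.Qk k v (L.proj r u)" if r: "r < T" for r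
      proof -
        have "nat (Nf r) \<le> k" unfolding k_def using r by (intro member_le_sum) auto
        hence ge: "Nf r \<le> int k" by linarith
        have Ak: "\<And>n. n \<ge> int k \<Longrightarrow> Y (L.proj r u) v n = 0" using Nf ge by simp
        have "in_W_two_var (prodk smulW T YW k (L.proj r u) v w) \<and>
              assoc_lhs smulW Y T YW k (L.proj r u) v w = subst_x1 smulW T (prodk smulW T YW k (L.proj r u) v w)" for w
          using L.b_to_a_eig[OF L.proj_eig Ak] B r L.proj_eig by blast
        thus ?thesis using Ak unfolding L.Qk_def by blast
      qed
      have "L.Qk k v (\<Sum>r<T. L.proj r u)" by (rule L.Qk_sum) (use Q in auto)
      hence "L.Qk k v u" using L.proj_sum by simp
      thus "\<exists>k::nat.
            (\<forall>w. in_W_two_var (prodk smulW T YW k u v w)) \<and>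
            (\<forall>w. assoc_lhs smulW Y T YW k u v w = subst_x1 smulW T (prodk smulW T YW k u v w))"
        unfolding L.Qk_def by blast
    qed
  qed
qed

end
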